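(* Let $(\Omega,\mathcal F,\mu)$ be a $\sigma$-finite measure space, let $p \in \mathcal P_>$, and let $E \colon \mathcal E(p) \to \mathbb R$ be a function such that for every $r \in \mathcal E(p)$ the representation $E_r = E\circ e_r \colon \mathcal S_r \to \mathbb R$ is Fréchet differentiable. Let $q \in \mathcal E(p)$. (1) If $p_1,p_2 \in \mathcal E(p)$ and $u_i = s_{p_i}(q)$, $i=1,2$, then for every $w \in B_q$, $$dE_{p_1}(u_1)\big(w - \mathbb E_{p_1}[w]\big) = dE_{p_2}(u_2)\big(w - \mathbb E_{p_2}[w]\big).$$ In particular, for $u = s_p(q)$, the map $w \mapsto dE_p(u)(w - \mathbb E_p[w])$ is a linear functional on $B_q$ which does not depend on the choice of $p$ with $q \in \mathcal E(p)$. (2) Assume moreover that, for $u = s_p(q)$, there is $\nabla E_p(u) \in B^*_p$ with $dE_p(u)v = \mathbb E_p[\nabla E_p(u)\, v]$ for all $v \in B_p$. Let $G$ be a vector field, i.e. a map assigning to each $r \in \mathcal E(p)$ an element $G(r) \in B_r$. Then $$dE_p(u)\big(G(q) - \mathbb E_p[G(q)]\big) = \mathbb E_q\Big[\tfrac{p}{q}\,\nabla E_p(u)\, G(q)\Big].$$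
   Context: $\mathcal P_>$ denotes the set of probability densities with respect to $\mu$ that are positive $\mu$-a.s. For $p\in\mathcal P_>$, $L^{\Phi}(p)$ is the Orlicz space of real random variables $u$ with $\mathbb E_p[\Phi(\alpha u)]<\infty$ for some $\alpha>0$, where $\Phi(y)=\cosh y-1$, with the Luxemburg norm (closed unit ball $\{v:\mathbb E_p[\Phi(v)]\le 1\}$); $L^{\Phi_*}(p)$ is the Orlicz space for $\Phi_*(x)=(1+|x|)\ln(1+|x|)-|x|$. Set $B_p=\{u\in L^\Phi(p):\mathbb E_p[u]=0\}$ and $B^*_p=\{v\in L^{\Phi_*}(p):\mathbb E_p[v]=0\}$. The cumulant functional is $K_p(u)=\ln \mathbb E_p[e^u]\in[0,+\infty]$ for $u\in B_p$, and $\mathcal S_p$ is the interior (in $B_p$) of its proper domain. The maximal exponential model is $\mathcal E(p)=\{e_p(u):u\in\mathcal S_p\}$ with $e_p(u)=e^{u-K_p(u)}\cdot p$; the chart $s_p\colon\mathcal E(p)\to\mathcal S_p$, $s_p(q)=\ln(q/p)-\mathbb E_p[\ln(q/p)]$, is the inverse of $e_p$. It is known that if $q\in\mathcal E(p)$ then $\mathcal E(q)=\mathcal E(p)$ and $L^\Phi(q)=L^\Phi(p)$ as vector spaces with equivalent norms, so $w-\mathbb E_p[w]\in B_p$ for $w\in B_q$. *)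

theory Defs
  imports "HOL-Analysis.Analysis"
begin

definition Phi :: "real \<Rightarrow> real" where
  "Phi y = cosh y - 1"

definition Phi_star :: "real \<Rightarrow> real" where
  "Phi_star x = (1 + \<bar>x\<bar>) * ln (1 + \<bar>x\<bar>) - \<bar>x\<bar>"

definition pos_dens :: "'a measure \<Rightarrow> ('a \<Rightarrow> real) set" where
  "pos_dens M = {p. p \<in> borel_measurable M \<and> (AE x in M. p x > 0) \<and>
      integrable M p \<and> (\<integral>x. p x \<partial>M) = 1}"

definition Ep :: "'a measure \<Rightarrow> ('a \<Rightarrow> real) \<Rightarrow> ('a \<Rightarrow> real) \<Rightarrow> real" where
  "Ep M p f = (\<integral>x. p x * f x \<partial>M)"

definition orlicz :: "'a measure \<Rightarrow> (real \<Rightarrow> real) \<Rightarrow> ('a \<Rightarrow> real) \<Rightarrow> ('a \<Rightarrow> real) set" where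
  "orlicz M F p = {u. u \<in> borel_measurable M \<and>
      (\<exists>\<alpha>>0. (\<integral>\<^sup>+x. ennreal (p x * F (\<alpha> * u x)) \<partial>M) < \<infinity>)}"

definition lux_norm :: "'a measure \<Rightarrow> ('a \<Rightarrow> real) \<Rightarrow> ('a \<Rightarrow> real) \<Rightarrow> real" where
  "lux_norm M p u = Inf {c. c > 0 \<and> (\<integral>\<^sup>+x. ennreal (p x * Phi (u x / c)) \<partial>M) \<le> 1}"

definition Bsp :: "'a measure \<Rightarrow> ('a \<Rightarrow> real) \<Rightarrow> ('a \<Rightarrow> real) set" where
  "Bsp M p = {u \<in> orlicz M Phi p. Ep M p u = 0}"

definition Bstar :: "'a measure \<Rightarrow> ('a \<Rightarrow> real) \<Rightarrow> ('a \<Rightarrow> real) set" where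
  "Bstar M p = {v \<in> orlicz M Phi_star p. Ep M p v = 0}"

definition Kp :: "'a measure \<Rightarrow> ('a \<Rightarrow> real) \<Rightarrow> ('a \<Rightarrow> real) \<Rightarrow> real" where
  "Kp M p u = ln (\<integral>x. p x * exp (u x) \<partial>M)"

definition dom_K :: "'a measure \<Rightarrow> ('a \<Rightarrow> real) \<Rightarrow> ('a \<Rightarrow> real) set" where
  "dom_K M p = {u \<in> Bsp M p. (\<integral>\<^sup>+x. ennreal (p x * exp (u x)) \<partial>M) < \<infinity>}"

definition Sp :: "'a measure \<Rightarrow> ('a \<Rightarrow> real) \<Rightarrow> ('a \<Rightarrow> real) set" where
  "Sp M p = {u \<in> Bsp M p. \<exists>\<epsilon>>0. \<forall>v\<in>Bsp M p.
      lux_norm M p (\<lambda>x. v x - u x) < \<epsilon> \<longrightarrow> v \<in> dom_K M p}"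

definition e_p :: "'a measure \<Rightarrow> ('a \<Rightarrow> real) \<Rightarrow> ('a \<Rightarrow> real) \<Rightarrow> ('a \<Rightarrow> real)" where
  "e_p M p u = (\<lambda>x. exp (u x - Kp M p u) * p x)"

definition s_p :: "'a measure \<Rightarrow> ('a \<Rightarrow> real) \<Rightarrow> ('a \<Rightarrow> real) \<Rightarrow> ('a \<Rightarrow> real)" where
  "s_p M p q = (\<lambda>x. ln (q x / p x) - Ep M p (\<lambda>y. ln (q y / p y)))"

definition maxexp :: "'a measure \<Rightarrow> ('a \<Rightarrow> real) \<Rightarrow> ('a \<Rightarrow> real) set" where
  "maxexp M p = e_p M p ` Sp M p"

definition frechet_deriv ::
  "'a measure \<Rightarrow> ('a \<Rightarrow> real) \<Rightarrow> (('a \<Rightarrow> real) \<Rightarrow> real) \<Rightarrow> ('a \<Rightarrow> real)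
     \<Rightarrow> (('a \<Rightarrow> real) \<Rightarrow> real) \<Rightarrow> bool" where
  "frechet_deriv M r F u L \<longleftrightarrow>
     (\<forall>v\<in>Bsp M r. \<forall>w\<in>Bsp M r. \<forall>a b::real.
        L (\<lambda>x. a * v x + b * w x) = a * L v + b * L w) \<and>
     (\<exists>C. \<forall>v\<in>Bsp M r. \<bar>L v\<bar> \<le> C * lux_norm M r v) \<and>
     (\<forall>\<epsilon>>0. \<exists>\<delta>>0. \<forall>h\<in>Bsp M r.
        (\<lambda>x. u x + h x) \<in> Sp M r \<and> lux_norm M r h < \<delta> \<longrightarrow>
        \<bar>F (\<lambda>x. u x + h x) - F u - L h\<bar> \<le> \<epsilon> * lux_norm M r h)"

definition linear_on :: "('a \<Rightarrow> real) set \<Rightarrow> (('a \<Rightarrow> real) \<Rightarrow> real) \<Rightarrow> bool" where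
  "linear_on B L \<longleftrightarrow> (\<forall>v\<in>B. \<forall>w\<in>B. \<forall>a b::real.
        L (\<lambda>x. a * v x + b * w x) = a * L v + b * L w)"

end

theory Submission
  imports Defs
begin

lemma Phi_nonneg: "0 \<le> Phi x"
  using cosh_real_ge_1[of x] by (simp add: Phi_def)

lemma Phi_even: "Phi (- x) = Phi x"
  by (simp add: Phi_def)

lemma Phi_0[simp]: "Phi 0 = 0"
  by (simp add: Phi_def)

lemma cosh_exp: "cosh (x::real) = (exp x + exp (- x)) / 2"
  by (simp add: cosh_def)

lemma exp_conv: fixes l x y :: real assumes "0 \<le> l" "l \<le> 1" shows "exp (l * x + (1 - l) * y) \<le> l * exp x + (1 - l) * exp y"
proof -
  have "exp ((1 - l) * y + l * x) \<le> (1 - l) * exp y + l * exp x"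
    using convex_onD[OF exp_convex, of l y x] assms by simp
  then show ?thesis by (simp only: add.commute)
qed

lemma Phi_convex:
  assumes "0 \<le> l" "l \<le> 1"
  shows "Phi (l * x + (1 - l) * y) \<le> l * Phi x + (1 - l) * Phi y"
proof -
  have a: "exp (l * x + (1 - l) * y) \<le> l * exp x + (1 - l) * exp y" using exp_conv assms by blast
  have b: "exp (l * (-x) + (1 - l) * (-y)) \<le> l * exp (-x) + (1 - l) * exp (-y)" using exp_conv assms by blast
  have n: "- (l * x + (1 - l) * y) = l * (-x) + (1 - l) * (-y)" by algebra
  have L: "Phi (l * x + (1 - l) * y) = (exp (l * x + (1 - l) * y) + exp (l * (-x) + (1 - l) * (-y))) / 2 - 1"
    unfolding Phi_def cosh_exp n by simp
  have R: "l * Phi x + (1 - l) * Phi y = (l * exp x + (1 - l) * exp y + (l * exp (-x) + (1 - l) * exp (-y))) / 2 - 1"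
    unfolding Phi_def cosh_exp by (simp add: field_simps)
  show ?thesis unfolding L R using a b by (intro diff_right_mono divide_right_mono add_mono) auto
qed

lemma Phi_scale: "0 \<le> l \<Longrightarrow> l \<le> 1 \<Longrightarrow> Phi (l * x) \<le> l * Phi x"
  using Phi_convex[of l x 0] by simp

lemma Phi_abs: "Phi \<bar>x\<bar> = Phi x"
  by (cases "x \<ge> 0") (simp_all add: Phi_even abs_of_nonneg abs_of_neg)

lemma Phi_mono_abs: assumes h: "\<bar>x\<bar> \<le> \<bar>y\<bar>" shows "Phi x \<le> Phi y"
proof (cases "y = 0")
  case True
  then show ?thesis using h by simp
next
  case False
  define l where "l = \<bar>x\<bar> / \<bar>y\<bar>"
  have l: "0 \<le> l" "l \<le> 1" using h False by (auto simp: l_def)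
  have "Phi \<bar>x\<bar> = Phi (l * \<bar>y\<bar>)" using False by (simp add: l_def)
  also have "\<dots> \<le> l * Phi \<bar>y\<bar>" using Phi_scale l by blast
  also have "\<dots> \<le> Phi \<bar>y\<bar>" using l Phi_nonneg[of "\<bar>y\<bar>"] by (metis mult_left_le_one_le)
  finally show ?thesis by (simp add: Phi_abs)
qed

lemma Phi_sq: "(Phi x)^2 \<le> Phi (2 * x)"
proof -
  have "cosh (2 * x) = 2 * (cosh x)^2 - 1" using cosh_double[of x] cosh_square_eq[of x] by simp
  then have "Phi (2*x) = 2 * Phi x * (Phi x + 2)" unfolding Phi_def by (simp add: algebra_simps power2_eq_square)
  have "Phi x \<le> 2*(Phi x + 2)" using Phi_nonneg[of x] by simp
  then have "Phi x * Phi x \<le> 2*(Phi x + 2) * Phi x" using Phi_nonneg[of x] by (rule mult_right_mono)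
  then show ?thesis using \<open>Phi (2*x) = _\<close> by (simp add: power2_eq_square algebra_simps)
qed

lemma Phi_pow: "(Phi x)^(2^n) \<le> Phi (2^n * x)"
proof (induction n arbitrary: x)
  case 0 then show ?case by simp
next
  case (Suc n)
  have "(Phi x)^(2^Suc n) = ((Phi x)^(2^n))^2" by (simp add: power_mult[symmetric] mult.commute)
  also have "\<dots> \<le> (Phi (2^n * x))^2" using Suc Phi_nonneg by (intro power_mono) (auto simp: zero_le_power)
  also have "\<dots> \<le> Phi (2 * (2^n * x))" by (rule Phi_sq)
  finally show ?case by (simp add: mult.assoc)
qed

lemma exp_abs_le_Phi: "exp \<bar>x\<bar> \<le> 2 * Phi x + 2"
  unfolding Phi_def cosh_exp by (cases "x \<ge> 0") auto

lemma exp_le_Phi: "exp x \<le> 2 * Phi x + 2"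
proof -
  have "exp x \<le> exp \<bar>x\<bar>" by simp
  then show ?thesis using exp_abs_le_Phi[of x] by linarith
qed

lemma abs_le_Phi: "\<bar>x\<bar> \<le> 2 * Phi x + 2"
proof -
  have "1 + \<bar>x\<bar> \<le> exp \<bar>x\<bar>" by (rule exp_ge_add_one_self)
  then show ?thesis using exp_abs_le_Phi[of x] by linarith
qed

lemma young:
  fixes X Y :: real assumes "0 \<le> X" "0 \<le> Y"
  shows "X * Y \<le> exp X - 1 - X + ((1 + Y) * ln (1 + Y) - Y)"
proof -
  define t where "t = ln (1 + Y)"
  have et: "exp t = 1 + Y" using assms by (simp add: t_def)
  have "exp X = exp t * exp (X - t)" by (simp add: exp_diff)
  also have "\<dots> \<ge> exp t * (1 + (X - t))" using exp_ge_add_one_self[of "X - t"] et assms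
    by (intro mult_left_mono) auto
  finally have "exp X \<ge> (1 + Y) * (1 + X - t)" using et by (simp add: algebra_simps)
  then have "exp X \<ge> 1 + X - t + Y + X * Y - Y * t" by (simp add: algebra_simps)
  moreover have "(1 + Y) * ln (1 + Y) = t + Y * t" by (simp add: t_def algebra_simps)
  ultimately show ?thesis by linarith
qed

lemma Phi_exp: "Phi x = (exp x + exp (- x)) / 2 - 1" by (simp add: Phi_def cosh_exp)

lemma Phi_cont: "continuous_on UNIV Phi"
  unfolding Phi_def by (intro continuous_intros)

lemma Phi_star_cont: "continuous_on UNIV Phi_star"
  unfolding Phi_star_def by (intro continuous_intros) auto

lemma Phi_meas[measurable]: "f \<in> borel_measurable M \<Longrightarrow> (\<lambda>x. Phi (f x)) \<in> borel_measurable M"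
  by (rule borel_measurable_continuous_on[OF Phi_cont])

lemma Phi_star_meas[measurable]: "f \<in> borel_measurable M \<Longrightarrow> (\<lambda>x. Phi_star (f x)) \<in> borel_measurable M"
  by (rule borel_measurable_continuous_on[OF Phi_star_cont])

lemma Phi_half: "Phi (1/2) \<le> 1"
proof -
  have "exp (1/2::real) \<le> exp 1" by simp
  also have "\<dots> \<le> 3" by (rule exp_le)
  finally have "exp (1/2::real) \<le> 3" .
  moreover have "exp (- (1/2::real)) \<le> 1" by simp
  moreover have "\<And>A B::real. A \<le> 3 \<Longrightarrow> B \<le> 1 \<Longrightarrow> (A + B) / 2 - 1 \<le> 1" by simp
  ultimately show ?thesis unfolding Phi_exp by blast
qed

lemma enn_mono: "0 \<le> a \<Longrightarrow> a \<le> b \<Longrightarrow> ennreal (r * a) \<le> ennreal (r * b)"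
proof (cases "r \<ge> 0")
  case True
  assume "0 \<le> a" "a \<le> b"
  then show ?thesis using True by (intro ennreal_leI mult_left_mono)
next
  case False
  assume "0 \<le> a" "a \<le> b"
  then have "r * a \<le> 0" using False by (simp add: mult_nonpos_nonneg)
  then show ?thesis by (simp add: ennreal_neg)
qed

definition LS :: "'a measure \<Rightarrow> ('a \<Rightarrow> real) \<Rightarrow> ('a \<Rightarrow> real) \<Rightarrow> real set" where
  "LS M r u = {c. c > 0 \<and> (\<integral>\<^sup>+x. ennreal (r x * Phi (u x / c)) \<partial>M) \<le> 1}"

lemma lux_LS: "lux_norm M r u = Inf (LS M r u)"
  by (simp add: lux_norm_def LS_def)

lemma LS_pos: "c \<in> LS M r u \<Longrightarrow> c > 0" by (simp add: LS_def)

lemma LS_up: assumes "c \<in> LS M r u" "c \<le> c'" shows "c' \<in> LS M r u"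
proof -
  have c: "c > 0" using assms LS_pos by blast
  have "(\<integral>\<^sup>+x. ennreal (r x * Phi (u x / c')) \<partial>M) \<le> (\<integral>\<^sup>+x. ennreal (r x * Phi (u x / c)) \<partial>M)"
  proof (rule nn_integral_mono)
    fix x
    have "\<bar>u x / c'\<bar> \<le> \<bar>u x / c\<bar>" using c assms(2)
      by (simp add: abs_div frac_le divide_left_mono)
    then show "ennreal (r x * Phi (u x / c')) \<le> ennreal (r x * Phi (u x / c))"
      by (intro enn_mono Phi_nonneg Phi_mono_abs)
  qed
  also have "\<dots> \<le> 1" using assms(1) by (simp add: LS_def)
  finally show ?thesis using c assms(2) by (simp add: LS_def)
qed

lemma LS_bdd: "bdd_below (LS M r u)"
  by (rule bdd_belowI[of _ 0]) (auto simp: LS_def)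

lemma lux_nonneg: "LS M r u \<noteq> {} \<Longrightarrow> 0 \<le> lux_norm M r u"
  unfolding lux_LS by (rule cInf_greatest) (auto simp: LS_def)

lemma lux_le: "c \<in> LS M r u \<Longrightarrow> lux_norm M r u \<le> c"
  unfolding lux_LS by (rule cInf_lower[OF _ LS_bdd])

lemma lux_less: assumes "LS M r u \<noteq> {}" "lux_norm M r u < c" shows "c \<in> LS M r u"
proof -
  obtain c' where "c' \<in> LS M r u" "c' < c"
    using assms cInf_less_iff[OF assms(1) LS_bdd] unfolding lux_LS by blast
  then show ?thesis using LS_up by fastforce
qed

lemma lux_leI: assumes "\<And>c. c > B \<Longrightarrow> c \<in> LS M r u" shows "lux_norm M r u \<le> B"
proof (rule field_le_epsilon)
  fix e :: real assume "0 < e"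
  then have "B + e \<in> LS M r u" using assms by simp
  then show "lux_norm M r u \<le> B + e" by (rule lux_le)
qed

lemma Phi_meas2[measurable]: "r \<in> borel_measurable M \<Longrightarrow> u \<in> borel_measurable M \<Longrightarrow>
  (\<lambda>x. ennreal (r x * Phi (u x / c))) \<in> borel_measurable M"
proof -
  assume r: "r \<in> borel_measurable M" and u: "u \<in> borel_measurable M"
  have "(\<lambda>x. u x / c) \<in> borel_measurable M" using u by simp
  then have "(\<lambda>x. Phi (u x / c)) \<in> borel_measurable M" by (rule Phi_meas)
  then show ?thesis using r by simp
qed

lemma LS_add:
  assumes r: "r \<in> borel_measurable M" and u: "u \<in> borel_measurable M" and v: "v \<in> borel_measurable M"
    and a: "a \<in> LS M r u" and b: "b \<in> LS M r v"
  shows "a + b \<in> LS M r (\<lambda>x. u x + v x)"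
proof -
  have a0: "a > 0" and b0: "b > 0" using a b LS_pos by auto
  define c where "c = a + b"
  have c0: "c > 0" using a0 b0 by (simp add: c_def)
  have l: "0 \<le> a / c" "a / c \<le> 1" "1 - a / c = b / c" using a0 b0 by (auto simp: c_def field_simps)
  have pt: "ennreal (r x * Phi ((u x + v x) / c)) \<le>
      ennreal (a / c) * ennreal (r x * Phi (u x / a)) + ennreal (b / c) * ennreal (r x * Phi (v x / b))" for x
  proof -
    have "(a / c) * (u x / a) + (1 - a / c) * (v x / b) = u x / c + v x / c"
      using a0 b0 l(3) by simp
    then have e: "(u x + v x) / c = (a / c) * (u x / a) + (1 - a / c) * (v x / b)"
      by (simp add: add_divide_distrib)
    have "Phi ((u x + v x) / c) \<le> (a / c) * Phi (u x / a) + (b / c) * Phi (v x / b)"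
      unfolding e l(3)[symmetric] by (rule Phi_convex[OF l(1,2)])
    then have "ennreal (r x * Phi ((u x + v x) / c)) \<le> ennreal (r x * ((a / c) * Phi (u x / a) + (b / c) * Phi (v x / b)))"
      by (intro enn_mono Phi_nonneg)
    also have "\<dots> \<le> ennreal (a / c) * ennreal (r x * Phi (u x / a)) + ennreal (b / c) * ennreal (r x * Phi (v x / b))"
    proof (cases "r x \<ge> 0")
      case True
      have n1: "0 \<le> (a / c) * (r x * Phi (u x / a))" using True a0 c0 Phi_nonneg by simp
      have n2: "0 \<le> (b / c) * (r x * Phi (v x / b))" using True b0 c0 Phi_nonneg by simp
      have "r x * ((a / c) * Phi (u x / a) + (b / c) * Phi (v x / b)) =
          (a / c) * (r x * Phi (u x / a)) + (b / c) * (r x * Phi (v x / b))" by (simp add: algebra_simps)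
      then have "ennreal (r x * ((a / c) * Phi (u x / a) + (b / c) * Phi (v x / b))) =
          ennreal ((a / c) * (r x * Phi (u x / a))) + ennreal ((b / c) * (r x * Phi (v x / b)))"
        using n1 n2 by (simp only: ennreal_plus)
      also have "\<dots> = ennreal (a / c) * ennreal (r x * Phi (u x / a)) + ennreal (b / c) * ennreal (r x * Phi (v x / b))"
      proof -
        have n3: "0 \<le> a / c" "0 \<le> b / c" using a0 b0 c0 by auto
        show ?thesis by (simp only: ennreal_mult'[OF n3(1)] ennreal_mult'[OF n3(2)])
      qed
      finally show ?thesis by simp
    next
      case False
      then have "r x * ((a / c) * Phi (u x / a) + (b / c) * Phi (v x / b)) \<le> 0"
        using a0 b0 c0 Phi_nonneg by (intro mult_nonpos_nonneg) auto
      then show ?thesis by (simp add: ennreal_neg)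
    qed
    finally show ?thesis .
  qed
  have "(\<integral>\<^sup>+x. ennreal (r x * Phi ((u x + v x) / c)) \<partial>M) \<le>
      (\<integral>\<^sup>+x. ennreal (a / c) * ennreal (r x * Phi (u x / a)) + ennreal (b / c) * ennreal (r x * Phi (v x / b)) \<partial>M)"
    by (rule nn_integral_mono) (rule pt)
  also have "\<dots> = ennreal (a / c) * (\<integral>\<^sup>+x. ennreal (r x * Phi (u x / a)) \<partial>M) +
       ennreal (b / c) * (\<integral>\<^sup>+x. ennreal (r x * Phi (v x / b)) \<partial>M)"
  proof -
    note m1[measurable] = Phi_meas2[OF r u, of a]
    note m2[measurable] = Phi_meas2[OF r v, of b]
    show ?thesis by (subst nn_integral_add) (auto simp: nn_integral_cmult)
  qed
  also have "\<dots> \<le> ennreal (a / c) * 1 + ennreal (b / c) * 1"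
    using a b unfolding LS_def by (intro add_mono mult_left_mono) auto
  also have "\<dots> = 1" using a0 b0 c0 by (simp add: ennreal_plus[symmetric] c_def add_divide_distrib[symmetric])
  finally show ?thesis using c0 by (simp add: LS_def c_def)
qed

lemma LS_scale:
  assumes c: "c \<in> LS M r u" and t: "t \<noteq> 0"
  shows "\<bar>t\<bar> * c \<in> LS M r (\<lambda>x. t * u x)"
proof -
  have c0: "c > 0" using c LS_pos by blast
  have "\<bar>t * u x / (\<bar>t\<bar> * c)\<bar> = \<bar>u x / c\<bar>" for x using t c0 by (simp add: abs_mult abs_div)
  then have "Phi (t * u x / (\<bar>t\<bar> * c)) = Phi (u x / c)" for x
    by (metis Phi_abs)
  then show ?thesis using c c0 t by (simp add: LS_def)
qed

lemma LS_zero: "c > 0 \<Longrightarrow> c \<in> LS M r (\<lambda>x. 0 * u x)"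
  by (simp add: LS_def)

lemma lux_scale: assumes "LS M r u \<noteq> {}" shows "lux_norm M r (\<lambda>x. t * u x) \<le> \<bar>t\<bar> * lux_norm M r u"
proof (rule lux_leI)
  fix c assume c: "\<bar>t\<bar> * lux_norm M r u < c"
  show "c \<in> LS M r (\<lambda>x. t * u x)"
  proof (cases "t = 0")
    case True
    then show ?thesis using c LS_zero by (simp add: LS_def)
  next
    case False
    then have "lux_norm M r u < c / \<bar>t\<bar>" using c by (simp add: field_simps)
    then have "c / \<bar>t\<bar> \<in> LS M r u" using lux_less assms by blast
    from LS_scale[OF this False] show ?thesis using False by simp
  qed
qed

lemma lux_add:
  assumes r: "r \<in> borel_measurable M" and u: "u \<in> borel_measurable M" and v: "v \<in> borel_measurable M"
    and "LS M r u \<noteq> {}" "LS M r v \<noteq> {}"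
  shows "lux_norm M r (\<lambda>x. u x + v x) \<le> lux_norm M r u + lux_norm M r v"
proof (rule lux_leI)
  fix c assume c: "lux_norm M r u + lux_norm M r v < c"
  define d where "d = (c - lux_norm M r u - lux_norm M r v) / 2"
  have d: "d > 0" using c by (simp add: d_def)
  have "lux_norm M r u + d \<in> LS M r u" using lux_less[OF assms(4)] d by simp
  moreover have "lux_norm M r v + d \<in> LS M r v" using lux_less[OF assms(5)] d by simp
  ultimately have "(lux_norm M r u + d) + (lux_norm M r v + d) \<in> LS M r (\<lambda>x. u x + v x)"
    using LS_add r u v by blast
  moreover have "(lux_norm M r u + d) + (lux_norm M r v + d) = c" by (simp add: d_def)
  ultimately show "c \<in> LS M r (\<lambda>x. u x + v x)" by simp
qed

lemma pd_meas: "r \<in> pos_dens M \<Longrightarrow> r \<in> borel_measurable M" by (simp add: pos_dens_def)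
lemma pd_pos: "r \<in> pos_dens M \<Longrightarrow> AE x in M. r x > 0" by (simp add: pos_dens_def)
lemma pd_nonneg: "r \<in> pos_dens M \<Longrightarrow> AE x in M. r x \<ge> 0" using pd_pos by (fastforce elim: AE_mp)
lemma pd_int: "r \<in> pos_dens M \<Longrightarrow> integrable M r" by (simp add: pos_dens_def)
lemma pd_nn1: assumes "r \<in> pos_dens M" shows "(\<integral>\<^sup>+x. ennreal (r x) \<partial>M) = 1"
proof -
  have "(\<integral>\<^sup>+x. ennreal (r x) \<partial>M) = ennreal (\<integral>x. r x \<partial>M)"
    using assms by (intro nn_integral_eq_integral) (auto simp: pos_dens_def pd_nonneg)
  then show ?thesis using assms by (simp add: pos_dens_def)
qed

lemma orlicz_LS:
  assumes r: "r \<in> borel_measurable M"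
  shows "u \<in> orlicz M Phi r \<longleftrightarrow> u \<in> borel_measurable M \<and> LS M r u \<noteq> {}"
proof
  assume "u \<in> orlicz M Phi r"
  then obtain \<alpha> where u: "u \<in> borel_measurable M" and a: "\<alpha> > 0"
      and A: "(\<integral>\<^sup>+x. ennreal (r x * Phi (\<alpha> * u x)) \<partial>M) < \<infinity>"
    by (auto simp: orlicz_def)
  define A where "A = (\<integral>\<^sup>+x. ennreal (r x * Phi (\<alpha> * u x)) \<partial>M)"
  define m where "m = max 1 (enn2real A)"
  have m1: "m \<ge> 1" by (simp add: m_def)
  have At: "A \<noteq> \<infinity>" using A by (simp add: A_def)
  have "A = ennreal (enn2real A)" using At by (simp add: ennreal_enn2real_if)
  also have "\<dots> \<le> ennreal m" by (rule ennreal_leI) (simp add: m_def)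
  finally have Am: "A \<le> ennreal m" .
  define c where "c = m / \<alpha>"
  have c0: "c > 0" using m1 a by (simp add: c_def)
  have pt: "ennreal (r x * Phi (u x / c)) \<le> ennreal (1 / m) * ennreal (r x * Phi (\<alpha> * u x))" for x
  proof -
    have "u x / c = (1 / m) * (\<alpha> * u x)" using a m1 by (simp add: c_def)
    then have "Phi (u x / c) \<le> (1 / m) * Phi (\<alpha> * u x)" using m1 Phi_scale[of "1/m" "\<alpha> * u x"] by simp
    then have "ennreal (r x * Phi (u x / c)) \<le> ennreal (r x * ((1 / m) * Phi (\<alpha> * u x)))"
      by (intro enn_mono Phi_nonneg)
    also have "\<dots> = ennreal ((1 / m) * (r x * Phi (\<alpha> * u x)))" by (simp add: algebra_simps)
    also have "\<dots> = ennreal (1 / m) * ennreal (r x * Phi (\<alpha> * u x))"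
      using m1 by (intro ennreal_mult') simp
    finally show ?thesis .
  qed
  have "(\<integral>\<^sup>+x. ennreal (r x * Phi (u x / c)) \<partial>M) \<le> (\<integral>\<^sup>+x. ennreal (1 / m) * ennreal (r x * Phi (\<alpha> * u x)) \<partial>M)"
    by (rule nn_integral_mono) (rule pt)
  also have "\<dots> = ennreal (1 / m) * A"
  proof -
    have "(\<lambda>x. \<alpha> * u x) \<in> borel_measurable M" using u by simp
    note m[measurable] = Phi_meas2[OF r this, of 1, simplified]
    show ?thesis unfolding A_def by (rule nn_integral_cmult) measurable
  qed
  also have "\<dots> \<le> ennreal (1 / m) * ennreal m" using Am by (rule mult_left_mono) simp
  also have "\<dots> = 1" using m1 by (simp add: ennreal_mult[symmetric])
  finally have "c \<in> LS M r u" using c0 by (simp add: LS_def)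
  then show "u \<in> borel_measurable M \<and> LS M r u \<noteq> {}" using u by blast
next
  assume "u \<in> borel_measurable M \<and> LS M r u \<noteq> {}"
  then obtain c where u: "u \<in> borel_measurable M" and c: "c \<in> LS M r u" by blast
  have c0: "c > 0" using c LS_pos by blast
  have "(\<integral>\<^sup>+x. ennreal (r x * Phi ((1 / c) * u x)) \<partial>M) = (\<integral>\<^sup>+x. ennreal (r x * Phi (u x / c)) \<partial>M)"
    by simp
  also have "\<dots> \<le> 1" using c by (simp add: LS_def)
  also have "(1::ennreal) < \<infinity>" by simp
  finally have fin: "(\<integral>\<^sup>+x. ennreal (r x * Phi ((1 / c) * u x)) \<partial>M) < \<infinity>" .
  show "u \<in> orlicz M Phi r" unfolding orlicz_def
  proof (intro CollectI conjI exI[of _ "1/c"])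
    show "u \<in> borel_measurable M" by (rule u)
    show "0 < 1 / c" using c0 by simp
    show "(\<integral>\<^sup>+x. ennreal (r x * Phi ((1 / c) * u x)) \<partial>M) < \<infinity>" by (rule fin)
  qed
qed

lemma LS_const: assumes r: "r \<in> pos_dens M" shows "2 * \<bar>k\<bar> + 1 \<in> LS M r (\<lambda>_. k)"
proof -
  define c where "c = 2 * \<bar>k\<bar> + 1"
  have c0: "c > 0" by (simp add: c_def)
  have "\<bar>k / c\<bar> \<le> \<bar>1/2\<bar>" using c0 by (simp add: c_def abs_div field_simps)
  then have "Phi (k / c) \<le> Phi (1/2)" by (rule Phi_mono_abs)
  then have P: "Phi (k / c) \<le> 1" using Phi_half by linarith
  have "(\<integral>\<^sup>+x. ennreal (r x * Phi (k / c)) \<partial>M) \<le> (\<integral>\<^sup>+x. ennreal (r x * 1) \<partial>M)"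
    by (rule nn_integral_mono) (intro enn_mono Phi_nonneg P)
  also have "\<dots> = 1" using pd_nn1[OF r] by simp
  finally show ?thesis using c0 by (simp add: LS_def c_def)
qed

lemma orlicz_const: "r \<in> pos_dens M \<Longrightarrow> (\<lambda>_. k) \<in> orlicz M Phi r"
  using orlicz_LS[OF pd_meas] LS_const by fastforce

lemma orlicz_meas: "u \<in> orlicz M Phi r \<Longrightarrow> u \<in> borel_measurable M"
  by (simp add: orlicz_def)

lemma orlicz_LS_ne: "r \<in> pos_dens M \<Longrightarrow> u \<in> orlicz M Phi r \<Longrightarrow> LS M r u \<noteq> {}"
  using orlicz_LS[OF pd_meas] by blast

lemma orlicz_add: assumes r: "r \<in> pos_dens M" and u: "u \<in> orlicz M Phi r" and v: "v \<in> orlicz M Phi r"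
  shows "(\<lambda>x. u x + v x) \<in> orlicz M Phi r"
proof -
  obtain a b where "a \<in> LS M r u" "b \<in> LS M r v" using orlicz_LS_ne[OF r] u v by blast
  then have "a + b \<in> LS M r (\<lambda>x. u x + v x)"
    using LS_add pd_meas[OF r] orlicz_meas u v by blast
  then show ?thesis using orlicz_LS[OF pd_meas[OF r]] orlicz_meas[OF u] orlicz_meas[OF v] by auto
qed

lemma orlicz_scale: assumes r: "r \<in> pos_dens M" and u: "u \<in> orlicz M Phi r"
  shows "(\<lambda>x. t * u x) \<in> orlicz M Phi r"
proof (cases "t = 0")
  case True
  then show ?thesis using orlicz_const[OF r, of 0] by simp
next
  case False
  obtain a where "a \<in> LS M r u" using orlicz_LS_ne[OF r] u by blast
  then have "\<bar>t\<bar> * a \<in> LS M r (\<lambda>x. t * u x)" using LS_scale False by blast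
  then show ?thesis using orlicz_LS[OF pd_meas[OF r]] orlicz_meas[OF u] by auto
qed

lemma orlicz_lin: assumes r: "r \<in> pos_dens M" and u: "u \<in> orlicz M Phi r" and v: "v \<in> orlicz M Phi r"
  shows "(\<lambda>x. a * u x + b * v x) \<in> orlicz M Phi r"
  using orlicz_add[OF r orlicz_scale[OF r u] orlicz_scale[OF r v]] .

lemma orlicz_diff: assumes r: "r \<in> pos_dens M" and u: "u \<in> orlicz M Phi r" and v: "v \<in> orlicz M Phi r"
  shows "(\<lambda>x. u x - v x) \<in> orlicz M Phi r"
  using orlicz_lin[OF r u v, of 1 "-1"] by simp

lemma LS_cong_AE: "AE x in M. u x = v x \<Longrightarrow> LS M r u = LS M r v"
proof -
  assume "AE x in M. u x = v x"
  then have "(\<integral>\<^sup>+x. ennreal (r x * Phi (u x / c)) \<partial>M) = (\<integral>\<^sup>+x. ennreal (r x * Phi (v x / c)) \<partial>M)" for c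
    by (intro nn_integral_cong_AE) (auto elim: AE_mp)
  then show ?thesis by (simp add: LS_def)
qed

lemma lux_cong_AE: "AE x in M. u x = v x \<Longrightarrow> lux_norm M r u = lux_norm M r v"
  using LS_cong_AE by (metis lux_LS)

lemma orlicz_cong_AE: assumes r: "r \<in> pos_dens M" and u: "u \<in> orlicz M Phi r"
  and v: "v \<in> borel_measurable M" and e: "AE x in M. u x = v x"
  shows "v \<in> orlicz M Phi r"
  using orlicz_LS[OF pd_meas[OF r]] u v LS_cong_AE[OF e] by auto

lemma exp_bound: assumes r: "r \<in> pos_dens M" and u: "u \<in> borel_measurable M" and c: "c \<in> LS M r u"
  shows "(\<integral>\<^sup>+x. ennreal (r x * exp (u x / c)) \<partial>M) \<le> 4"
proof -
  note rm[measurable] = pd_meas[OF r]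
  note m[measurable] = Phi_meas2[OF rm u, of c]
  have "(\<integral>\<^sup>+x. ennreal (r x * exp (u x / c)) \<partial>M) \<le>
      (\<integral>\<^sup>+x. ennreal 2 * ennreal (r x * Phi (u x / c)) + ennreal 2 * ennreal (r x) \<partial>M)"
  proof (rule nn_integral_mono_AE)
    show "AE x in M. ennreal (r x * exp (u x / c)) \<le> ennreal 2 * ennreal (r x * Phi (u x / c)) + ennreal 2 * ennreal (r x)"
      using pd_nonneg[OF r]
    proof (rule AE_mp, intro AE_I2 impI)
      fix x assume rx: "0 \<le> r x"
      have "r x * exp (u x / c) \<le> r x * (2 * Phi (u x / c) + 2)" using rx exp_le_Phi by (intro mult_left_mono) auto
      also have "\<dots> = 2 * (r x * Phi (u x / c)) + 2 * r x" by (simp add: algebra_simps)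
      finally have "ennreal (r x * exp (u x / c)) \<le> ennreal (2 * (r x * Phi (u x / c)) + 2 * r x)" by (rule ennreal_leI)
      also have "\<dots> = ennreal 2 * ennreal (r x * Phi (u x / c)) + ennreal 2 * ennreal (r x)"
        using rx Phi_nonneg by (simp add: ennreal_plus ennreal_mult)
      finally show "ennreal (r x * exp (u x / c)) \<le> ennreal 2 * ennreal (r x * Phi (u x / c)) + ennreal 2 * ennreal (r x)" .
    qed
  qed
  also have "\<dots> = ennreal 2 * (\<integral>\<^sup>+x. ennreal (r x * Phi (u x / c)) \<partial>M) + ennreal 2 * (\<integral>\<^sup>+x. ennreal (r x) \<partial>M)"
    by (subst nn_integral_add) (auto simp: nn_integral_cmult)
  also have "\<dots> \<le> ennreal 2 * 1 + ennreal 2 * 1"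
    using c pd_nn1[OF r] by (intro add_mono mult_left_mono) (auto simp: LS_def)
  also have "\<dots> = 4" by (simp add: ennreal_plus[symmetric] del: ennreal_plus)
  finally show ?thesis .
qed

lemma abs_bound: assumes r: "r \<in> pos_dens M" and u: "u \<in> borel_measurable M" and c: "c \<in> LS M r u"
  shows "(\<integral>\<^sup>+x. ennreal (r x * \<bar>u x\<bar>) \<partial>M) \<le> ennreal (4 * c)"
proof -
  note rm[measurable] = pd_meas[OF r]
  note m[measurable] = Phi_meas2[OF rm u, of c]
  have c0: "c > 0" using c LS_pos by blast
  have "(\<integral>\<^sup>+x. ennreal (r x * \<bar>u x\<bar>) \<partial>M) \<le>
      (\<integral>\<^sup>+x. ennreal (2 * c) * ennreal (r x * Phi (u x / c)) + ennreal (2 * c) * ennreal (r x) \<partial>M)"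
  proof (rule nn_integral_mono_AE)
    show "AE x in M. ennreal (r x * \<bar>u x\<bar>) \<le> ennreal (2 * c) * ennreal (r x * Phi (u x / c)) + ennreal (2 * c) * ennreal (r x)"
      using pd_nonneg[OF r]
    proof (rule AE_mp, intro AE_I2 impI)
      fix x assume rx: "0 \<le> r x"
      have "\<bar>u x\<bar> = c * \<bar>u x / c\<bar>" using c0 by (simp add: abs_div)
      also have "\<dots> \<le> c * (2 * Phi (u x / c) + 2)" using c0 abs_le_Phi[of "u x / c"] by (intro mult_left_mono) auto
      finally have "r x * \<bar>u x\<bar> \<le> r x * (c * (2 * Phi (u x / c) + 2))" using rx by (intro mult_left_mono)
      also have "\<dots> = (2 * c) * (r x * Phi (u x / c)) + (2 * c) * r x" by (simp add: algebra_simps)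
      finally have "ennreal (r x * \<bar>u x\<bar>) \<le> ennreal ((2 * c) * (r x * Phi (u x / c)) + (2 * c) * r x)" by (rule ennreal_leI)
      also have "\<dots> = ennreal (2 * c) * ennreal (r x * Phi (u x / c)) + ennreal (2 * c) * ennreal (r x)"
        using rx Phi_nonneg c0 by (simp add: ennreal_plus ennreal_mult)
      finally show "ennreal (r x * \<bar>u x\<bar>) \<le> ennreal (2 * c) * ennreal (r x * Phi (u x / c)) + ennreal (2 * c) * ennreal (r x)" .
    qed
  qed
  also have "\<dots> = ennreal (2 * c) * (\<integral>\<^sup>+x. ennreal (r x * Phi (u x / c)) \<partial>M) + ennreal (2 * c) * (\<integral>\<^sup>+x. ennreal (r x) \<partial>M)"
    by (subst nn_integral_add) (auto simp: nn_integral_cmult)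
  also have "\<dots> \<le> ennreal (2 * c) * 1 + ennreal (2 * c) * 1"
    using c pd_nn1[OF r] by (intro add_mono mult_left_mono) (auto simp: LS_def)
  also have "\<dots> = ennreal (4 * c)" using c0 by (simp add: ennreal_plus[symmetric] del: ennreal_plus)
  finally show ?thesis .
qed

lemma orlicz_abs_fin: assumes r: "r \<in> pos_dens M" and u: "u \<in> orlicz M Phi r"
  shows "(\<integral>\<^sup>+x. ennreal (r x * \<bar>u x\<bar>) \<partial>M) < \<infinity>"
proof -
  obtain c where c: "c \<in> LS M r u" using orlicz_LS_ne[OF r u] by blast
  have "(\<integral>\<^sup>+x. ennreal (r x * \<bar>u x\<bar>) \<partial>M) \<le> ennreal (4 * c)" by (rule abs_bound[OF r orlicz_meas[OF u] c])
  also have "\<dots> < \<infinity>" by simp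
  finally show ?thesis .
qed

lemma orlicz_integrable: assumes r: "r \<in> pos_dens M" and u: "u \<in> orlicz M Phi r"
  shows "integrable M (\<lambda>x. r x * u x)"
proof (rule integrableI_bounded)
  show "(\<lambda>x. r x * u x) \<in> borel_measurable M" using pd_meas[OF r] orlicz_meas[OF u] by simp
  have "(\<integral>\<^sup>+x. ennreal (norm (r x * u x)) \<partial>M) = (\<integral>\<^sup>+x. ennreal (r x * \<bar>u x\<bar>) \<partial>M)"
    using pd_nonneg[OF r] by (intro nn_integral_cong_AE) (auto elim!: AE_mp simp: abs_mult)
  then show "(\<integral>\<^sup>+x. ennreal (norm (r x * u x)) \<partial>M) < \<infinity>" using orlicz_abs_fin[OF r u] by simp
qed

lemma Ep_abs_LS: assumes r: "r \<in> pos_dens M" and u: "u \<in> orlicz M Phi r" and c: "c \<in> LS M r u"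
  shows "\<bar>Ep M r u\<bar> \<le> 4 * c"
proof -
  have i: "integrable M (\<lambda>x. r x * u x)" by (rule orlicz_integrable[OF r u])
  have c0: "c > 0" using c LS_pos by blast
  have A: "\<bar>Ep M r u\<bar> \<le> (\<integral>x. \<bar>r x * u x\<bar> \<partial>M)" unfolding Ep_def by (rule integral_abs_bound)
  have "ennreal (\<integral>x. \<bar>r x * u x\<bar> \<partial>M) = (\<integral>\<^sup>+x. ennreal (\<bar>r x * u x\<bar>) \<partial>M)"
    using i by (intro nn_integral_eq_integral[symmetric]) auto
  moreover have "(\<integral>\<^sup>+x. ennreal (\<bar>r x * u x\<bar>) \<partial>M) = (\<integral>\<^sup>+x. ennreal (r x * \<bar>u x\<bar>) \<partial>M)"
    using pd_nonneg[OF r] by (intro nn_integral_cong_AE) (auto elim!: AE_mp simp: abs_mult)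
  moreover have "(\<integral>\<^sup>+x. ennreal (r x * \<bar>u x\<bar>) \<partial>M) \<le> ennreal (4 * c)" by (rule abs_bound[OF r orlicz_meas[OF u] c])
  ultimately have "ennreal (\<integral>x. \<bar>r x * u x\<bar> \<partial>M) \<le> ennreal (4 * c)" by simp
  then have "(\<integral>x. \<bar>r x * u x\<bar> \<partial>M) \<le> 4 * c" using c0 by (simp add: ennreal_le_iff)
  with A show ?thesis by linarith
qed

lemma Ep_abs_lux: assumes r: "r \<in> pos_dens M" and u: "u \<in> orlicz M Phi r"
  shows "\<bar>Ep M r u\<bar> \<le> 4 * lux_norm M r u"
proof (rule field_le_epsilon)
  fix e :: real assume e: "0 < e"
  have "lux_norm M r u + e / 4 \<in> LS M r u" using lux_less[OF orlicz_LS_ne[OF r u]] e by simp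
  then have "\<bar>Ep M r u\<bar> \<le> 4 * (lux_norm M r u + e / 4)" by (rule Ep_abs_LS[OF r u])
  then show "\<bar>Ep M r u\<bar> \<le> 4 * lux_norm M r u + e" by (simp add: algebra_simps)
qed

lemma Ep_const: assumes r: "r \<in> pos_dens M" shows "Ep M r (\<lambda>_. k) = k"
  using r by (simp add: Ep_def pos_dens_def)

lemma Ep_lin: assumes r: "r \<in> pos_dens M" and u: "u \<in> orlicz M Phi r" and v: "v \<in> orlicz M Phi r"
  shows "Ep M r (\<lambda>x. a * u x + b * v x) = a * Ep M r u + b * Ep M r v"
proof -
  have "(\<lambda>x. r x * (a * u x + b * v x)) = (\<lambda>x. a * (r x * u x) + b * (r x * v x))" by (simp add: algebra_simps)
  moreover have "(\<integral>x. a * (r x * u x) + b * (r x * v x) \<partial>M) = a * (\<integral>x. r x * u x \<partial>M) + b * (\<integral>x. r x * v x \<partial>M)"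
    using orlicz_integrable[OF r u] orlicz_integrable[OF r v] by simp
  ultimately show ?thesis by (simp add: Ep_def)
qed

lemma Ep_diff_const: assumes r: "r \<in> pos_dens M" and u: "u \<in> orlicz M Phi r"
  shows "Ep M r (\<lambda>x. u x - k) = Ep M r u - k"
proof -
  have "Ep M r (\<lambda>x. 1 * u x + (-k) * (\<lambda>_. 1) x) = 1 * Ep M r u + (-k) * Ep M r (\<lambda>_. 1)"
    by (rule Ep_lin[OF r u orlicz_const[OF r]])
  then show ?thesis using Ep_const[OF r, of 1] by simp
qed

lemma Bsp_center: assumes r: "r \<in> pos_dens M" and u: "u \<in> orlicz M Phi r"
  shows "(\<lambda>x. u x - Ep M r u) \<in> Bsp M r"
  unfolding Bsp_def using Ep_diff_const[OF r u] orlicz_diff[OF r u orlicz_const[OF r]] by simp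

lemma Bsp_orlicz: "u \<in> Bsp M r \<Longrightarrow> u \<in> orlicz M Phi r" by (simp add: Bsp_def)

lemma Bsp_lin: assumes r: "r \<in> pos_dens M" and u: "u \<in> Bsp M r" and v: "v \<in> Bsp M r"
  shows "(\<lambda>x. a * u x + b * v x) \<in> Bsp M r"
  using Ep_lin[OF r Bsp_orlicz[OF u] Bsp_orlicz[OF v]] orlicz_lin[OF r Bsp_orlicz[OF u] Bsp_orlicz[OF v]] u v
  by (simp add: Bsp_def)

lemma Bsp_add: "r \<in> pos_dens M \<Longrightarrow> u \<in> Bsp M r \<Longrightarrow> v \<in> Bsp M r \<Longrightarrow> (\<lambda>x. u x + v x) \<in> Bsp M r"
  using Bsp_lin[of r M u v 1 1] by simp

lemma Bsp_diff: "r \<in> pos_dens M \<Longrightarrow> u \<in> Bsp M r \<Longrightarrow> v \<in> Bsp M r \<Longrightarrow> (\<lambda>x. u x - v x) \<in> Bsp M r"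
  using Bsp_lin[of r M u v 1 "-1"] by simp

lemma Bsp_scale: "r \<in> pos_dens M \<Longrightarrow> u \<in> Bsp M r \<Longrightarrow> (\<lambda>x. t * u x) \<in> Bsp M r"
  using Bsp_lin[of r M u u t 0] by simp

lemma lux_add': "r \<in> pos_dens M \<Longrightarrow> u \<in> orlicz M Phi r \<Longrightarrow> v \<in> orlicz M Phi r \<Longrightarrow>
  lux_norm M r (\<lambda>x. u x + v x) \<le> lux_norm M r u + lux_norm M r v"
  by (rule lux_add[OF pd_meas orlicz_meas orlicz_meas orlicz_LS_ne orlicz_LS_ne])

lemma lux_scale': "r \<in> pos_dens M \<Longrightarrow> u \<in> orlicz M Phi r \<Longrightarrow>
  lux_norm M r (\<lambda>x. t * u x) \<le> \<bar>t\<bar> * lux_norm M r u"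
  by (rule lux_scale[OF orlicz_LS_ne])

lemma lux_nonneg': "r \<in> pos_dens M \<Longrightarrow> u \<in> orlicz M Phi r \<Longrightarrow> 0 \<le> lux_norm M r u"
  by (rule lux_nonneg[OF orlicz_LS_ne])

lemma lux_const: assumes r: "r \<in> pos_dens M"
  shows "lux_norm M r (\<lambda>_. k) \<le> \<bar>k\<bar> * lux_norm M r (\<lambda>_. 1)"
  using lux_scale'[OF r orlicz_const[OF r], of k 1] by simp

lemma lux_center: assumes r: "r \<in> pos_dens M" and u: "u \<in> orlicz M Phi r"
  shows "lux_norm M r (\<lambda>x. u x - Ep M r u) \<le> (1 + 4 * lux_norm M r (\<lambda>_. 1)) * lux_norm M r u"
proof -
  have "lux_norm M r (\<lambda>x. u x + (\<lambda>_. - Ep M r u) x) \<le> lux_norm M r u + lux_norm M r (\<lambda>_. - Ep M r u)"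
    by (rule lux_add'[OF r u orlicz_const[OF r]])
  also have "lux_norm M r (\<lambda>_. - Ep M r u) \<le> \<bar>Ep M r u\<bar> * lux_norm M r (\<lambda>_. 1)"
    using lux_const[OF r, of "- Ep M r u"] by simp
  also have "\<dots> \<le> (4 * lux_norm M r u) * lux_norm M r (\<lambda>_. 1)"
    using Ep_abs_lux[OF r u] lux_nonneg'[OF r orlicz_const[OF r]] by (rule mult_right_mono)
  finally show ?thesis by (simp add: algebra_simps)
qed

lemma lux_zero: "lux_norm M r (\<lambda>x. 0) \<le> 0"
  by (rule lux_leI) (simp add: LS_def)

lemma exp_fin: assumes r: "r \<in> pos_dens M" and u: "u \<in> orlicz M Phi r" and l: "lux_norm M r u < 1"
  shows "(\<integral>\<^sup>+x. ennreal (r x * exp (u x)) \<partial>M) < \<infinity>"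
proof -
  have "1 \<in> LS M r u" using lux_less[OF orlicz_LS_ne[OF r u] l] .
  then have "(\<integral>\<^sup>+x. ennreal (r x * exp (u x / 1)) \<partial>M) \<le> 4" by (rule exp_bound[OF r orlicz_meas[OF u]])
  then show ?thesis by (simp add: le_less_trans)
qed

lemma Sp_Bsp: "u \<in> Sp M r \<Longrightarrow> u \<in> Bsp M r" by (simp add: Sp_def)

lemma Sp_dom: assumes "u \<in> Sp M r" shows "u \<in> dom_K M r"
proof -
  obtain e where e: "e > 0" "\<forall>v\<in>Bsp M r. lux_norm M r (\<lambda>x. v x - u x) < e \<longrightarrow> v \<in> dom_K M r"
    using assms by (auto simp: Sp_def)
  have "lux_norm M r (\<lambda>x. u x - u x) < e" using lux_zero[of M r] e by simp
  then show ?thesis using e Sp_Bsp[OF assms] by blast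
qed

lemma Sp_ball: assumes r: "r \<in> pos_dens M" and u: "u \<in> Sp M r"
  shows "\<exists>e>0. \<forall>h\<in>Bsp M r. lux_norm M r h < e \<longrightarrow> (\<lambda>x. u x + h x) \<in> Sp M r"
proof -
  obtain e where e: "e > 0" "\<forall>v\<in>Bsp M r. lux_norm M r (\<lambda>x. v x - u x) < e \<longrightarrow> v \<in> dom_K M r"
    using u by (auto simp: Sp_def)
  have uB: "u \<in> Bsp M r" by (rule Sp_Bsp[OF u])
  show ?thesis
  proof (intro exI[of _ "e/2"] conjI ballI impI)
    show "e / 2 > 0" using e by simp
    fix h assume h: "h \<in> Bsp M r" and hl: "lux_norm M r h < e / 2"
    have uh: "(\<lambda>x. u x + h x) \<in> Bsp M r" by (rule Bsp_add[OF r uB h])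
    show "(\<lambda>x. u x + h x) \<in> Sp M r" unfolding Sp_def
    proof (intro CollectI conjI exI[of _ "e/2"] ballI impI)
      show "(\<lambda>x. u x + h x) \<in> Bsp M r" by (rule uh)
      show "e / 2 > 0" using e by simp
      fix v assume v: "v \<in> Bsp M r" and vl: "lux_norm M r (\<lambda>x. v x - (u x + h x)) < e / 2"
      have d: "(\<lambda>x. v x - (u x + h x)) \<in> orlicz M Phi r" using Bsp_orlicz[OF Bsp_diff[OF r v uh]] .
      have "lux_norm M r (\<lambda>x. (v x - (u x + h x)) + h x) \<le> lux_norm M r (\<lambda>x. v x - (u x + h x)) + lux_norm M r h"
        by (rule lux_add'[OF r d Bsp_orlicz[OF h]])
      moreover have "(\<lambda>x. (v x - (u x + h x)) + h x) = (\<lambda>x. v x - u x)" by simp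
      ultimately have "lux_norm M r (\<lambda>x. v x - u x) < e" using vl hl by simp
      then show "v \<in> dom_K M r" using e v by blast
    qed
  qed
qed

lemma key_ineq: fixes m :: nat assumes m: "m \<ge> 1" and z: "z \<ge> 0"
  shows "exp f * z \<le> exp (f * (1 + 1 / m)) + z ^ (m + 1)"
proof (cases "z \<le> exp (f / m)")
  case True
  have "exp f * z \<le> exp f * exp (f / m)" using True by (intro mult_left_mono) auto
  also have "\<dots> = exp (f * (1 + 1 / m))" by (simp add: exp_add[symmetric] algebra_simps)
  finally show ?thesis using z by (simp add: add_increasing2)
next
  case False
  then have zg: "z > exp (f / m)" by simp
  have "exp f = exp (f / m) ^ m" using m by (simp add: exp_of_nat_mult[symmetric])
  also have "\<dots> < z ^ m" using zg m by (intro power_strict_mono) auto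
  finally have "exp f * z \<le> z ^ m * z" using z by (intro mult_right_mono) auto
  also have "\<dots> = z ^ (m + 1)" by simp
  finally show ?thesis by (simp add: add_increasing)
qed

lemma cmp:
  assumes P: "P \<in> pos_dens M" and f: "f \<in> borel_measurable M" and n: "n \<ge> 1"
    and R: "\<And>x. R x = P x * exp (f x)"
    and A: "(\<integral>\<^sup>+x. ennreal (P x * exp (f x * (1 + 1 / ((2::real)^n - 1)))) \<partial>M) < \<infinity>"
  shows "\<exists>C>0. \<forall>g\<in>orlicz M Phi P. g \<in> orlicz M Phi R \<and> lux_norm M R g \<le> C * lux_norm M P g"
proof -
  define m :: nat where "m = 2^n - 1"
  have "(2::nat)^1 \<le> 2^n" using n by (intro power_increasing) auto
  then have m1: "m \<ge> 1" by (simp add: m_def)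
  have mN: "m + 1 = 2^n" unfolding m_def by simp
  have "real (m + 1) = real (2^n)" using mN by (simp only:)
  then have mr: "real m = (2::real)^n - 1" by simp
  define A where "A = (\<integral>\<^sup>+x. ennreal (P x * exp (f x * (1 + 1 / real m))) \<partial>M)"
  have Afin: "A < \<infinity>" using A by (simp add: A_def mr)
  define A' where "A' = enn2real A"
  have AA: "A = ennreal A'" using Afin by (simp add: A'_def ennreal_enn2real_if)
  have A'0: "A' \<ge> 0" by (simp add: A'_def)
  define C where "C = 2^n * (A' + 1)"
  have C0: "C > 0" using A'0 by (simp add: C_def)
  note Pm[measurable] = pd_meas[OF P]
  note fm[measurable] = f
  have Rm: "R \<in> borel_measurable M" unfolding R[abs_def] by simp
  have LS_tr: "C * l \<in> LS M R g" if g: "g \<in> borel_measurable M" and l: "l \<in> LS M P g" for g l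
  proof -
    note gm[measurable] = g
    have l0: "l > 0" using l LS_pos by blast
    define c where "c = C * l"
    have c0: "c > 0" using C0 l0 by (simp add: c_def)
    have pt: "AE x in M. ennreal (R x * Phi (g x / c)) \<le>
        ennreal (1 / (A' + 1)) * (ennreal (P x * exp (f x * (1 + 1 / real m))) + ennreal (P x * Phi (g x / l)))"
      using pd_nonneg[OF P]
    proof (rule AE_mp, intro AE_I2 impI)
      fix x assume Px: "0 \<le> P x"
      define z where "z = Phi (g x / (2^n * l))"
      have z0: "z \<ge> 0" by (simp add: z_def Phi_nonneg)
      have e1: "g x / c = (1 / (A' + 1)) * (g x / (2^n * l))" using A'0 by (simp add: c_def C_def)
      have s: "Phi (g x / c) \<le> (1 / (A' + 1)) * z" unfolding z_def e1 using A'0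
        by (intro Phi_scale) auto
      have "z ^ (m + 1) \<le> Phi (2^n * (g x / (2^n * l)))" unfolding mN z_def by (rule Phi_pow)
      also have "2^n * (g x / (2^n * l)) = g x / l" by simp
      finally have zp: "z ^ (m + 1) \<le> Phi (g x / l)" .
      have k: "exp (f x) * z \<le> exp (f x * (1 + 1 / real m)) + Phi (g x / l)"
        using key_ineq[OF m1 z0, of "f x"] zp by linarith
      have "R x * Phi (g x / c) \<le> P x * exp (f x) * ((1 / (A' + 1)) * z)"
        unfolding R using Px s by (intro mult_left_mono) auto
      also have "\<dots> = (1 / (A' + 1)) * (P x * (exp (f x) * z))" by (simp add: algebra_simps)
      also have "\<dots> \<le> (1 / (A' + 1)) * (P x * (exp (f x * (1 + 1 / real m)) + Phi (g x / l)))"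
        using k Px A'0 by (intro mult_left_mono) auto
      also have "\<dots> = (1 / (A' + 1)) * (P x * exp (f x * (1 + 1 / real m)) + P x * Phi (g x / l))"
        by (simp add: algebra_simps)
      finally have "ennreal (R x * Phi (g x / c)) \<le> ennreal ((1 / (A' + 1)) * (P x * exp (f x * (1 + 1 / real m)) + P x * Phi (g x / l)))"
        by (rule ennreal_leI)
      also have "\<dots> = ennreal (1 / (A' + 1)) * (ennreal (P x * exp (f x * (1 + 1 / real m))) + ennreal (P x * Phi (g x / l)))"
      proof -
        have k0: "0 \<le> 1 / (A' + 1)" using A'0 by simp
        have X0: "0 \<le> P x * exp (f x * (1 + 1 / real m))" using Px by simp
        have Y0: "0 \<le> P x * Phi (g x / l)" using Px Phi_nonneg by simp
        show ?thesis by (simp only: ennreal_mult'[OF k0] ennreal_plus[OF X0 Y0])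
      qed
      finally show "ennreal (R x * Phi (g x / c)) \<le>
        ennreal (1 / (A' + 1)) * (ennreal (P x * exp (f x * (1 + 1 / real m))) + ennreal (P x * Phi (g x / l)))" .
    qed
    have "(\<integral>\<^sup>+x. ennreal (R x * Phi (g x / c)) \<partial>M) \<le>
        (\<integral>\<^sup>+x. ennreal (1 / (A' + 1)) * (ennreal (P x * exp (f x * (1 + 1 / real m))) + ennreal (P x * Phi (g x / l))) \<partial>M)"
      by (rule nn_integral_mono_AE[OF pt])
    also have "\<dots> = ennreal (1 / (A' + 1)) * (A + (\<integral>\<^sup>+x. ennreal (P x * Phi (g x / l)) \<partial>M))"
    proof -
      note m2[measurable] = Phi_meas2[OF Pm g, of l]
      show ?thesis unfolding A_def by (subst nn_integral_cmult) (auto simp: nn_integral_add)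
    qed
    also have "\<dots> \<le> ennreal (1 / (A' + 1)) * (ennreal A' + 1)"
      using l unfolding AA by (intro mult_left_mono add_left_mono) (auto simp: LS_def)
    also have "\<dots> = 1"
    proof -
      have "ennreal A' + 1 = ennreal (A' + 1)" using A'0 by simp
      moreover have "ennreal (1 / (A' + 1)) * ennreal (A' + 1) = ennreal (1 / (A' + 1) * (A' + 1))"
        using A'0 by (intro ennreal_mult'[symmetric]) simp
      moreover have "1 / (A' + 1) * (A' + 1) = 1" using A'0 by simp
      ultimately show ?thesis by simp
    qed
    finally show ?thesis using c0 by (simp add: LS_def c_def)
  qed
  show ?thesis
  proof (intro exI[of _ C] conjI ballI)
    show "C > 0" by (rule C0)
    fix g assume g: "g \<in> orlicz M Phi P"
    have gm: "g \<in> borel_measurable M" by (rule orlicz_meas[OF g])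
    obtain l where l: "l \<in> LS M P g" using orlicz_LS_ne[OF P g] by blast
    show "g \<in> orlicz M Phi R" using orlicz_LS[OF Rm] LS_tr[OF gm l] gm by blast
    show "lux_norm M R g \<le> C * lux_norm M P g"
    proof (rule field_le_epsilon)
      fix e :: real assume e: "e > 0"
      have "lux_norm M P g + e / C \<in> LS M P g" using lux_less[OF orlicz_LS_ne[OF P g]] e C0 by simp
      then have "lux_norm M R g \<le> C * (lux_norm M P g + e / C)" using LS_tr[OF gm] lux_le by blast
      then show "lux_norm M R g \<le> C * lux_norm M P g + e" using C0 by (simp add: algebra_simps)
    qed
  qed
qed

lemma Zint: assumes p: "p \<in> pos_dens M" and f: "f \<in> borel_measurable M"
  and fin: "(\<integral>\<^sup>+x. ennreal (p x * exp (f x)) \<partial>M) < \<infinity>"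
  shows "integrable M (\<lambda>x. p x * exp (f x))" "(\<integral>x. p x * exp (f x) \<partial>M) > 0"
proof -
  note pm[measurable] = pd_meas[OF p]
  note fm[measurable] = f
  show i: "integrable M (\<lambda>x. p x * exp (f x))"
  proof (rule integrableI_bounded)
    show "(\<lambda>x. p x * exp (f x)) \<in> borel_measurable M" by simp
    have "(\<integral>\<^sup>+x. ennreal (norm (p x * exp (f x))) \<partial>M) = (\<integral>\<^sup>+x. ennreal (p x * exp (f x)) \<partial>M)"
      using pd_nonneg[OF p] by (intro nn_integral_cong_AE) (auto elim!: AE_mp simp: abs_mult)
    then show "(\<integral>\<^sup>+x. ennreal (norm (p x * exp (f x))) \<partial>M) < \<infinity>" using fin by simp
  qed
  have nn: "AE x in M. 0 \<le> p x * exp (f x)" using pd_nonneg[OF p] by (auto elim!: AE_mp)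
  have ge: "(\<integral>x. p x * exp (f x) \<partial>M) \<ge> 0" using nn by (rule integral_nonneg_AE)
  show "(\<integral>x. p x * exp (f x) \<partial>M) > 0"
  proof (rule ccontr)
    assume "\<not> ?thesis"
    then have "(\<integral>x. p x * exp (f x) \<partial>M) = 0" using ge by simp
    then have "AE x in M. p x * exp (f x) = 0" using integral_nonneg_eq_0_iff_AE[OF i nn] by simp
    then have "AE x in M. p x = 0" by (auto elim!: AE_mp)
    then have "(\<integral>x. p x \<partial>M) = (\<integral>x. 0 \<partial>M)" by (intro integral_cong_AE) auto
    then show False using p by (simp add: pos_dens_def)
  qed
qed

lemma dom_meas: "a \<in> dom_K M p \<Longrightarrow> a \<in> borel_measurable M"
  by (simp add: dom_K_def Bsp_def orlicz_def)

lemma dom_fin: "a \<in> dom_K M p \<Longrightarrow> (\<integral>\<^sup>+x. ennreal (p x * exp (a x)) \<partial>M) < \<infinity>"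
  by (simp add: dom_K_def)

lemma ep_pd: assumes p: "p \<in> pos_dens M" and a: "a \<in> dom_K M p"
  shows "e_p M p a \<in> pos_dens M"
proof -
  note pm[measurable] = pd_meas[OF p]
  note am[measurable] = dom_meas[OF a]
  define Z where "Z = (\<integral>x. p x * exp (a x) \<partial>M)"
  have i: "integrable M (\<lambda>x. p x * exp (a x))" and Z0: "Z > 0"
    using Zint[OF p am dom_fin[OF a]] by (auto simp: Z_def)
  have K: "Kp M p a = ln Z" by (simp add: Kp_def Z_def)
  have e: "e_p M p a = (\<lambda>x. (1 / Z) * (p x * exp (a x)))"
    using Z0 by (auto simp: e_p_def K exp_diff)
  show ?thesis unfolding pos_dens_def
  proof (intro CollectI conjI)
    show "e_p M p a \<in> borel_measurable M" unfolding e by simp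
    show "AE x in M. e_p M p a x > 0" unfolding e using pd_pos[OF p] Z0 by (auto elim!: AE_mp)
    show "integrable M (e_p M p a)" unfolding e using i by simp
    show "(\<integral>x. e_p M p a x \<partial>M) = 1" unfolding e using Z0 by (simp add: Z_def[symmetric])
  qed
qed

lemma small_n: assumes L: "L \<ge> 0" and d: "d > 0"
  shows "\<exists>n\<ge>1. L / ((2::real)^n - 1) < d"
proof -
  obtain N :: nat where N: "L / d < N" using reals_Archimedean2 by blast
  define n where "n = N + 1"
  have "n < 2^n" by (rule less_exp)
  then have "real n < 2^n" by (metis of_nat_less_iff of_nat_numeral of_nat_power)
  then have g: "(2::real)^n - 1 > N" by (simp add: n_def)
  have N0: "real N \<ge> 0" by simp
  have pos: "(2::real)^n - 1 > 0" using g N0 by linarith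
  have "L < d * N" using N d by (simp add: field_simps)
  also have "\<dots> \<le> d * ((2::real)^n - 1)" using g d by (intro mult_left_mono) auto
  finally have "L / ((2::real)^n - 1) < d" using pos by (simp add: field_simps)
  then show ?thesis using n_def by (intro exI[of _ n]) auto
qed

lemma Sp_meas: "a \<in> Sp M p \<Longrightarrow> a \<in> borel_measurable M"
  by (simp add: Sp_def Bsp_def orlicz_def)

lemma two_pow_pos: "n \<ge> 1 \<Longrightarrow> (2::real)^n - 1 > 0"
proof -
  assume n: "n \<ge> 1"
  have "(2::real)^1 \<le> 2^n" using n by (intro power_increasing) auto
  then show ?thesis by simp
qed

lemma cmp_pr: assumes p: "p \<in> pos_dens M" and a: "a \<in> Sp M p"
  shows "\<exists>C>0. \<forall>g\<in>orlicz M Phi p. g \<in> orlicz M Phi (e_p M p a) \<and> lux_norm M (e_p M p a) g \<le> C * lux_norm M p g"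
proof -
  note am[measurable] = Sp_meas[OF a]
  note pm[measurable] = pd_meas[OF p]
  have aB: "a \<in> Bsp M p" by (rule Sp_Bsp[OF a])
  have ao: "a \<in> orlicz M Phi p" by (rule Bsp_orlicz[OF aB])
  define K where "K = Kp M p a"
  obtain e where e: "e > 0" "\<forall>h\<in>Bsp M p. lux_norm M p h < e \<longrightarrow> (\<lambda>x. a x + h x) \<in> Sp M p"
    using Sp_ball[OF p a] by blast
  obtain n where n: "n \<ge> 1" "lux_norm M p a / ((2::real)^n - 1) < e"
    using small_n[OF lux_nonneg'[OF p ao] e(1)] by blast
  define t where "t = 1 / ((2::real)^n - 1)"
  have t0: "t > 0" using two_pow_pos[OF n(1)] by (simp add: t_def)
  have hB: "(\<lambda>x. t * a x) \<in> Bsp M p" by (rule Bsp_scale[OF p aB])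
  have "lux_norm M p (\<lambda>x. t * a x) \<le> \<bar>t\<bar> * lux_norm M p a" by (rule lux_scale'[OF p ao])
  also have "\<dots> < e" using n(2) t0 by (simp add: t_def)
  finally have "(\<lambda>x. a x + t * a x) \<in> Sp M p" using e hB by blast
  then have fin: "(\<integral>\<^sup>+x. ennreal (p x * exp (a x + t * a x)) \<partial>M) < \<infinity>" using Sp_dom dom_fin by blast
  have eq: "ennreal (p x * exp ((a x - K) * (1 + t))) = ennreal (exp (- K * (1 + t))) * ennreal (p x * exp (a x + t * a x))" for x
  proof -
    have h: "p x * exp ((a x - K) * (1 + t)) = exp (- K * (1 + t)) * (p x * exp (a x + t * a x))"
      by (simp add: exp_add[symmetric] algebra_simps)
    show ?thesis unfolding h by (rule ennreal_mult') simp
  qed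
  have "(\<integral>\<^sup>+x. ennreal (p x * exp ((a x - K) * (1 + t))) \<partial>M) = ennreal (exp (- K * (1 + t))) * (\<integral>\<^sup>+x. ennreal (p x * exp (a x + t * a x)) \<partial>M)"
    unfolding eq by (rule nn_integral_cmult) simp
  also have "\<dots> < \<infinity>" using fin by (simp add: ennreal_mult_less_top)
  finally have A: "(\<integral>\<^sup>+x. ennreal (p x * exp ((a x - K) * (1 + 1 / ((2::real)^n - 1)))) \<partial>M) < \<infinity>"
    by (simp add: t_def)
  have R: "e_p M p a x = p x * exp (a x - K)" for x by (simp add: e_p_def K_def)
  show ?thesis by (rule cmp[OF p _ n(1) R A]) simp
qed

lemma cmp_rp: assumes p: "p \<in> pos_dens M" and a: "a \<in> Sp M p"
  shows "\<exists>C>0. \<forall>g\<in>orlicz M Phi (e_p M p a). g \<in> orlicz M Phi p \<and> lux_norm M p g \<le> C * lux_norm M (e_p M p a) g"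
proof -
  note am[measurable] = Sp_meas[OF a]
  note pm[measurable] = pd_meas[OF p]
  have aB: "a \<in> Bsp M p" by (rule Sp_Bsp[OF a])
  have ao: "a \<in> orlicz M Phi p" by (rule Bsp_orlicz[OF aB])
  have r: "e_p M p a \<in> pos_dens M" by (rule ep_pd[OF p Sp_dom[OF a]])
  define K where "K = Kp M p a"
  obtain n where n: "n \<ge> 1" "lux_norm M p a / ((2::real)^n - 1) < 1"
    using small_n[OF lux_nonneg'[OF p ao], of 1] by auto
  define t where "t = 1 / ((2::real)^n - 1)"
  have t0: "t > 0" using two_pow_pos[OF n(1)] by (simp add: t_def)
  have ho: "(\<lambda>x. (- t) * a x) \<in> orlicz M Phi p" by (rule orlicz_scale[OF p ao])
  have "lux_norm M p (\<lambda>x. (- t) * a x) \<le> \<bar>- t\<bar> * lux_norm M p a" by (rule lux_scale'[OF p ao])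
  also have "\<dots> < 1" using n(2) t0 by (simp add: t_def)
  finally have fin: "(\<integral>\<^sup>+x. ennreal (p x * exp ((- t) * a x)) \<partial>M) < \<infinity>" by (rule exp_fin[OF p ho])
  have eq: "ennreal (e_p M p a x * exp ((K - a x) * (1 + t))) = ennreal (exp (K * t)) * ennreal (p x * exp ((- t) * a x))" for x
  proof -
    have "exp (a x - K) * exp ((K - a x) * (1 + t)) = exp (K * t) * exp ((- t) * a x)"
      by (simp add: exp_add[symmetric] algebra_simps)
    then have h: "e_p M p a x * exp ((K - a x) * (1 + t)) = exp (K * t) * (p x * exp ((- t) * a x))"
      unfolding e_p_def K_def[symmetric] by (simp add: algebra_simps)
    show ?thesis unfolding h by (rule ennreal_mult') simp
  qed
  have "(\<integral>\<^sup>+x. ennreal (e_p M p a x * exp ((K - a x) * (1 + t))) \<partial>M) = ennreal (exp (K * t)) * (\<integral>\<^sup>+x. ennreal (p x * exp ((- t) * a x)) \<partial>M)"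
    unfolding eq by (rule nn_integral_cmult) simp
  also have "\<dots> < \<infinity>" using fin by (simp add: ennreal_mult_less_top)
  finally have A: "(\<integral>\<^sup>+x. ennreal (e_p M p a x * exp ((K - a x) * (1 + 1 / ((2::real)^n - 1)))) \<partial>M) < \<infinity>"
    by (simp add: t_def)
  have R: "p x = e_p M p a x * exp (K - a x)" for x
  proof -
    have "exp (a x - K) * exp (K - a x) = 1" by (simp add: exp_add[symmetric])
    then show ?thesis unfolding e_p_def K_def[symmetric] by (simp add: algebra_simps)
  qed
  show ?thesis by (rule cmp[OF r _ n(1) R A]) simp
qed

lemma nn_exp_shift: assumes pm: "p \<in> borel_measurable M" and G: "G \<in> borel_measurable M"
  and e: "AE x in M. F x = G x + c"
  shows "(\<integral>\<^sup>+x. ennreal (p x * exp (F x)) \<partial>M) = ennreal (exp c) * (\<integral>\<^sup>+x. ennreal (p x * exp (G x)) \<partial>M)"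
proof -
  have "(\<integral>\<^sup>+x. ennreal (p x * exp (F x)) \<partial>M) = (\<integral>\<^sup>+x. ennreal (exp c) * ennreal (p x * exp (G x)) \<partial>M)"
  proof (rule nn_integral_cong_AE)
    show "AE x in M. ennreal (p x * exp (F x)) = ennreal (exp c) * ennreal (p x * exp (G x))"
      using e
    proof (rule AE_mp, intro AE_I2 impI)
      fix x assume "F x = G x + c"
      then have h: "p x * exp (F x) = exp c * (p x * exp (G x))" by (simp add: exp_add)
      show "ennreal (p x * exp (F x)) = ennreal (exp c) * ennreal (p x * exp (G x))"
        unfolding h by (rule ennreal_mult') simp
    qed
  qed
  also have "\<dots> = ennreal (exp c) * (\<integral>\<^sup>+x. ennreal (p x * exp (G x)) \<partial>M)"
    using pm G by (intro nn_integral_cmult) simp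
  finally show ?thesis .
qed

lemma fin_shift: assumes pm: "p \<in> borel_measurable M" and G: "G \<in> borel_measurable M"
  and e: "AE x in M. F x = G x + c" and fin: "(\<integral>\<^sup>+x. ennreal (p x * exp (G x)) \<partial>M) < \<infinity>"
  shows "(\<integral>\<^sup>+x. ennreal (p x * exp (F x)) \<partial>M) < \<infinity>"
  unfolding nn_exp_shift[OF pm G e] using fin by (simp add: ennreal_mult_less_top)

lemma Kp_shift: assumes p: "p \<in> pos_dens M" and G: "G \<in> borel_measurable M"
  and F: "F \<in> borel_measurable M"
  and e: "AE x in M. F x = G x + c" and fin: "(\<integral>\<^sup>+x. ennreal (p x * exp (G x)) \<partial>M) < \<infinity>"
  shows "Kp M p F = c + Kp M p G"
proof -
  have Z: "(\<integral>x. p x * exp (G x) \<partial>M) > 0" by (rule Zint(2)[OF p G fin])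
  note [measurable] = pd_meas[OF p] G F
  have "(\<integral>x. p x * exp (F x) \<partial>M) = (\<integral>x. exp c * (p x * exp (G x)) \<partial>M)"
  proof (rule integral_cong_AE)
    show "(\<lambda>x. p x * exp (F x)) \<in> borel_measurable M" by measurable
    show "(\<lambda>x. exp c * (p x * exp (G x))) \<in> borel_measurable M" by measurable
    show "AE x in M. p x * exp (F x) = exp c * (p x * exp (G x))"
      using e by (auto elim!: AE_mp simp: exp_add)
  qed
  also have "\<dots> = exp c * (\<integral>x. p x * exp (G x) \<partial>M)" by simp
  finally show ?thesis using Z by (simp add: Kp_def ln_mult)
qed

lemma ep_shift: assumes p: "p \<in> pos_dens M" and G: "G \<in> borel_measurable M"
  and F: "F \<in> borel_measurable M"
  and e: "AE x in M. F x = G x + c" and fin: "(\<integral>\<^sup>+x. ennreal (p x * exp (G x)) \<partial>M) < \<infinity>"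
  shows "AE x in M. e_p M p F x = e_p M p G x"
  using e by (rule AE_mp) (auto simp: e_p_def Kp_shift[OF p G F e fin])

lemma ep_trans: assumes p: "p \<in> pos_dens M" and a: "a \<in> borel_measurable M" and v: "v \<in> borel_measurable M"
  and fin: "(\<integral>\<^sup>+x. ennreal (p x * exp (a x + v x)) \<partial>M) < \<infinity>"
  shows "e_p M (e_p M p a) v = e_p M p (\<lambda>x. a x + v x)"
proof -
  define Ka where "Ka = Kp M p a"
  have Z: "(\<integral>x. p x * exp (a x + v x) \<partial>M) > 0" using Zint(2)[OF p _ fin] a v by simp
  have "(\<lambda>x. e_p M p a x * exp (v x)) = (\<lambda>x. exp (- Ka) * (p x * exp (a x + v x)))"
    by (auto simp: e_p_def Ka_def exp_add[symmetric] algebra_simps)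
  then have "Kp M (e_p M p a) v = - Ka + Kp M p (\<lambda>x. a x + v x)"
    using Z by (simp add: Kp_def ln_mult)
  then show ?thesis
    by (auto simp: e_p_def Ka_def[symmetric] exp_add[symmetric] algebra_simps)
qed

lemma sp_formula: assumes p: "p \<in> pos_dens M" and a: "a \<in> Sp M p" and b: "b \<in> Sp M p"
  shows "\<exists>k. AE x in M. s_p M (e_p M p a) (e_p M p b) x = b x - a x + k"
proof -
  define k where "k = Kp M p a - Kp M p b - Ep M (e_p M p a) (\<lambda>y. ln (e_p M p b y / e_p M p a y))"
  have "AE x in M. s_p M (e_p M p a) (e_p M p b) x = b x - a x + k"
    using pd_pos[OF p]
  proof (rule AE_mp, intro AE_I2 impI)
    fix x assume px: "0 < p x"
    have "e_p M p b x / e_p M p a x = exp (b x - Kp M p b) / exp (a x - Kp M p a)"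
      using px by (simp add: e_p_def)
    also have "\<dots> = exp ((b x - Kp M p b) - (a x - Kp M p a))" by (simp add: exp_diff)
    finally show "s_p M (e_p M p a) (e_p M p b) x = b x - a x + k"
      by (simp add: s_p_def k_def)
  qed
  then show ?thesis by blast
qed

lemma chart:
  assumes p: "p \<in> pos_dens M" and a: "a \<in> Sp M p" and b: "b \<in> Sp M p" and w: "w \<in> orlicz M Phi p"
  shows "(\<lambda>x. w x - Ep M (e_p M p a) w) \<in> Bsp M (e_p M p a)"
    and "\<exists>T>0. \<forall>t. 0 \<le> t \<and> t < T \<longrightarrow> (\<lambda>x. b x + t * (w x - Ep M p w)) \<in> Sp M p \<and>
      (\<lambda>x. s_p M (e_p M p a) (e_p M p b) x + t * (w x - Ep M (e_p M p a) w)) \<in> Sp M (e_p M p a) \<and>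
      (AE x in M. e_p M (e_p M p a) (\<lambda>x. s_p M (e_p M p a) (e_p M p b) x + t * (w x - Ep M (e_p M p a) w)) x
          = e_p M p (\<lambda>x. b x + t * (w x - Ep M p w)) x)"
proof -
  define p1 where "p1 = e_p M p a"
  define q where "q = e_p M p b"
  define u1 where "u1 = s_p M p1 q"
  define h1 where "h1 = (\<lambda>x. w x - Ep M p1 w)"
  define w' where "w' = (\<lambda>x. w x - Ep M p w)"
  define Ka where "Ka = Kp M p a"
  note pm[measurable] = pd_meas[OF p]
  note am[measurable] = Sp_meas[OF a]
  note bm[measurable] = Sp_meas[OF b]
  note wm[measurable] = orlicz_meas[OF w]
  have p1pd: "p1 \<in> pos_dens M" unfolding p1_def by (rule ep_pd[OF p Sp_dom[OF a]])
  have qpd: "q \<in> pos_dens M" unfolding q_def by (rule ep_pd[OF p Sp_dom[OF b]])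
  note p1m[measurable] = pd_meas[OF p1pd]
  note qm[measurable] = pd_meas[OF qpd]
  obtain C1 where C1: "C1 > 0" "\<forall>g\<in>orlicz M Phi p. g \<in> orlicz M Phi p1 \<and> lux_norm M p1 g \<le> C1 * lux_norm M p g"
    using cmp_pr[OF p a] unfolding p1_def by blast
  obtain C2 where C2: "C2 > 0" "\<forall>g\<in>orlicz M Phi p1. g \<in> orlicz M Phi p \<and> lux_norm M p g \<le> C2 * lux_norm M p1 g"
    using cmp_rp[OF p a] unfolding p1_def by blast
  have w1: "w \<in> orlicz M Phi p1" using C1 w by blast
  have h1B: "h1 \<in> Bsp M p1" unfolding h1_def by (rule Bsp_center[OF p1pd w1])
  then show "(\<lambda>x. w x - Ep M (e_p M p a) w) \<in> Bsp M (e_p M p a)" by (simp add: h1_def p1_def)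
  obtain k where k: "AE x in M. u1 x = b x - a x + k"
    using sp_formula[OF p a b] unfolding u1_def p1_def q_def by blast
  define l where "l = (\<lambda>x. ln (q x / p1 x))"
  have u1l: "u1 = (\<lambda>x. l x - Ep M p1 l)" by (simp add: u1_def l_def s_p_def)
  have lm[measurable]: "l \<in> borel_measurable M" unfolding l_def by simp
  have u1m[measurable]: "u1 \<in> borel_measurable M" unfolding u1l by simp
  have ao1: "a \<in> orlicz M Phi p1" using C1 Bsp_orlicz[OF Sp_Bsp[OF a]] by blast
  have bo1: "b \<in> orlicz M Phi p1" using C1 Bsp_orlicz[OF Sp_Bsp[OF b]] by blast
  have "(\<lambda>x. (b x - a x) + (\<lambda>_. k + Ep M p1 l) x) \<in> orlicz M Phi p1"
    by (rule orlicz_add[OF p1pd orlicz_diff[OF p1pd bo1 ao1] orlicz_const[OF p1pd]])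
  moreover have "AE x in M. (b x - a x) + (\<lambda>_. k + Ep M p1 l) x = l x"
    using k by (rule AE_mp) (auto simp: u1l)
  ultimately have lo: "l \<in> orlicz M Phi p1" by (rule orlicz_cong_AE[OF p1pd _ lm])
  have u1B: "u1 \<in> Bsp M p1" unfolding u1l by (rule Bsp_center[OF p1pd lo])
  obtain eb where eb: "eb > 0" "\<forall>h\<in>Bsp M p. lux_norm M p h < eb \<longrightarrow> (\<lambda>x. b x + h x) \<in> Sp M p"
    using Sp_ball[OF p b] by blast
  have w'B: "w' \<in> Bsp M p" unfolding w'_def by (rule Bsp_center[OF p w])
  define Lw where "Lw = lux_norm M p w'"
  have Lw0: "Lw \<ge> 0" unfolding Lw_def by (rule lux_nonneg'[OF p Bsp_orlicz[OF w'B]])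
  define L1 where "L1 = lux_norm M p (\<lambda>_. 1)"
  have L10: "L1 \<ge> 0" unfolding L1_def by (rule lux_nonneg'[OF p orlicz_const[OF p]])
  define T where "T = eb / (2 * (Lw + 1))"
  have T0: "T > 0" using eb Lw0 by (simp add: T_def)
  define \<epsilon> where "\<epsilon> = eb / (2 * C2 * (1 + 4 * L1))"
  have \<epsilon>0: "\<epsilon> > 0" using eb C2 L10 by (simp add: \<epsilon>_def)
  show "\<exists>T>0. \<forall>t. 0 \<le> t \<and> t < T \<longrightarrow> (\<lambda>x. b x + t * (w x - Ep M p w)) \<in> Sp M p \<and>
      (\<lambda>x. s_p M (e_p M p a) (e_p M p b) x + t * (w x - Ep M (e_p M p a) w)) \<in> Sp M (e_p M p a) \<and>
      (AE x in M. e_p M (e_p M p a) (\<lambda>x. s_p M (e_p M p a) (e_p M p b) x + t * (w x - Ep M (e_p M p a) w)) x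
          = e_p M p (\<lambda>x. b x + t * (w x - Ep M p w)) x)"
  proof (intro exI[of _ T] conjI allI impI T0)
    fix t assume t: "0 \<le> t \<and> t < T"
    have twB: "(\<lambda>x. t * w' x) \<in> Bsp M p" by (rule Bsp_scale[OF p w'B])
    have "lux_norm M p (\<lambda>x. t * w' x) \<le> \<bar>t\<bar> * Lw" unfolding Lw_def by (rule lux_scale'[OF p Bsp_orlicz[OF w'B]])
    also have "\<dots> \<le> t * (Lw + 1)" using t by (simp add: mult_left_mono)
    also have "\<dots> < T * (Lw + 1)" using t Lw0 by (intro mult_strict_right_mono) auto
    also have "\<dots> = eb / 2" using Lw0 by (simp add: T_def field_simps)
    finally have twl: "lux_norm M p (\<lambda>x. t * w' x) < eb / 2" .
    define bt where "bt = (\<lambda>x. b x + t * w' x)"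
    have btS: "bt \<in> Sp M p" unfolding bt_def using eb twB twl by auto
    have btm[measurable]: "bt \<in> borel_measurable M" unfolding bt_def w'_def by simp
    have btfin: "(\<integral>\<^sup>+x. ennreal (p x * exp (bt x)) \<partial>M) < \<infinity>" using dom_fin[OF Sp_dom[OF btS]] .
    show "(\<lambda>x. b x + t * (w x - Ep M p w)) \<in> Sp M p" using btS by (simp add: bt_def w'_def)
    define c where "c = k + t * Ep M p w - t * Ep M p1 w"
    have e1: "AE x in M. a x + (u1 x + t * h1 x) = bt x + c"
      using k by (rule AE_mp) (auto simp: bt_def c_def h1_def w'_def algebra_simps)
    have F1m: "(\<lambda>x. a x + (u1 x + t * h1 x)) \<in> borel_measurable M" unfolding h1_def by simp
    have fin1: "(\<integral>\<^sup>+x. ennreal (p x * exp (a x + (u1 x + t * h1 x))) \<partial>M) < \<infinity>"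
      by (rule fin_shift[OF pm btm e1 btfin])
    have tr: "e_p M p1 (\<lambda>x. u1 x + t * h1 x) = e_p M p (\<lambda>x. a x + (u1 x + t * h1 x))"
      unfolding p1_def by (rule ep_trans[OF p am _ fin1]) (simp add: h1_def)
    have "AE x in M. e_p M p (\<lambda>x. a x + (u1 x + t * h1 x)) x = e_p M p bt x"
      by (rule ep_shift[OF p btm F1m e1 btfin])
    then show "AE x in M. e_p M (e_p M p a) (\<lambda>x. s_p M (e_p M p a) (e_p M p b) x + t * (w x - Ep M (e_p M p a) w)) x
          = e_p M p (\<lambda>x. b x + t * (w x - Ep M p w)) x"
      using tr by (simp add: p1_def q_def u1_def h1_def bt_def w'_def)
    have uthB: "(\<lambda>x. u1 x + t * h1 x) \<in> Bsp M p1" by (rule Bsp_add[OF p1pd u1B Bsp_scale[OF p1pd h1B]])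
    have "(\<lambda>x. u1 x + t * h1 x) \<in> Sp M p1" unfolding Sp_def
    proof (intro CollectI conjI exI[of _ \<epsilon>] ballI impI uthB \<epsilon>0)
      fix v assume vB: "v \<in> Bsp M p1" and vl: "lux_norm M p1 (\<lambda>x. v x - (u1 x + t * h1 x)) < \<epsilon>"
      note vm[measurable] = orlicz_meas[OF Bsp_orlicz[OF vB]]
      define g where "g = (\<lambda>x. v x - (u1 x + t * h1 x))"
      have go1: "g \<in> orlicz M Phi p1" unfolding g_def by (rule Bsp_orlicz[OF Bsp_diff[OF p1pd vB uthB]])
      have go: "g \<in> orlicz M Phi p" using C2 go1 by blast
      have gl: "lux_norm M p g \<le> C2 * lux_norm M p1 g" using C2 go1 by blast
      define g' where "g' = (\<lambda>x. g x - Ep M p g)"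
      have g'B: "g' \<in> Bsp M p" unfolding g'_def by (rule Bsp_center[OF p go])
      have "lux_norm M p g' \<le> (1 + 4 * L1) * lux_norm M p g" unfolding g'_def L1_def by (rule lux_center[OF p go])
      also have "\<dots> \<le> (1 + 4 * L1) * (C2 * lux_norm M p1 g)" using gl L10 by (intro mult_left_mono) auto
      also have "\<dots> < (1 + 4 * L1) * (C2 * \<epsilon>)" using vl C2 L10 unfolding g_def by (intro mult_strict_left_mono) auto
      also have "\<dots> = eb / 2"
      proof -
        have nz: "C2 * 2 + C2 * (L1 * 8) > 0" using C2(1) L10 by (intro add_pos_nonneg) auto
        then show ?thesis by (simp add: \<epsilon>_def field_simps)
      qed
      finally have g'l: "lux_norm M p g' < eb / 2" .
      define H where "H = (\<lambda>x. t * w' x + g' x)"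
      have HB: "H \<in> Bsp M p" unfolding H_def by (rule Bsp_add[OF p twB g'B])
      have "lux_norm M p H \<le> lux_norm M p (\<lambda>x. t * w' x) + lux_norm M p g'"
        unfolding H_def by (rule lux_add'[OF p Bsp_orlicz[OF twB] Bsp_orlicz[OF g'B]])
      then have "lux_norm M p H < eb" using twl g'l by simp
      then have bHS: "(\<lambda>x. b x + H x) \<in> Sp M p" using eb HB by blast
      have bHm[measurable]: "(\<lambda>x. b x + H x) \<in> borel_measurable M"
        unfolding H_def g'_def g_def w'_def h1_def by simp
      have bHfin: "(\<integral>\<^sup>+x. ennreal (p x * exp (b x + H x)) \<partial>M) < \<infinity>" using dom_fin[OF Sp_dom[OF bHS]] .
      define c' where "c' = - Ka + k + t * Ep M p w - t * Ep M p1 w + Ep M p g"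
      have e2: "AE x in M. a x - Ka + v x = (b x + H x) + c'"
        using k by (rule AE_mp) (auto simp: H_def g'_def g_def w'_def h1_def c'_def algebra_simps)
      have "(\<integral>\<^sup>+x. ennreal (p x * exp (a x - Ka + v x)) \<partial>M) < \<infinity>"
        by (rule fin_shift[OF pm bHm e2 bHfin])
      moreover have pw: "p1 x * exp (v x) = p x * exp (a x - Ka + v x)" for x
        by (auto simp: p1_def e_p_def Ka_def exp_add)
      ultimately have "(\<integral>\<^sup>+x. ennreal (p1 x * exp (v x)) \<partial>M) < \<infinity>" by simp
      then show "v \<in> dom_K M p1" using vB by (simp add: dom_K_def)
    qed
    then show "(\<lambda>x. s_p M (e_p M p a) (e_p M p b) x + t * (w x - Ep M (e_p M p a) w)) \<in> Sp M (e_p M p a)"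
      by (simp add: p1_def q_def u1_def h1_def)
  qed
qed

lemma dir:
  assumes p: "p \<in> pos_dens M" and a: "a \<in> Sp M p" and b: "b \<in> Sp M p" and w: "w \<in> orlicz M Phi p"
    and E_ae: "\<And>r r'. r \<in> maxexp M p \<Longrightarrow> (AE x in M. r x = r' x) \<Longrightarrow> E r' = E r"
    and L: "frechet_deriv M (e_p M p a) (\<lambda>v. E (e_p M (e_p M p a) v)) (s_p M (e_p M p a) (e_p M p b)) L"
    and e: "e > 0"
  shows "\<exists>T>0. \<forall>t. 0 < t \<and> t < T \<longrightarrow>
     \<bar>E (e_p M p (\<lambda>x. b x + t * (w x - Ep M p w))) - E (e_p M p b) - t * L (\<lambda>x. w x - Ep M (e_p M p a) w)\<bar>
       \<le> e * t * lux_norm M (e_p M p a) (\<lambda>x. w x - Ep M (e_p M p a) w)"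
proof -
  define p1 where "p1 = e_p M p a"
  define u1 where "u1 = s_p M p1 (e_p M p b)"
  define h1 where "h1 = (\<lambda>x. w x - Ep M p1 w)"
  define w' where "w' = (\<lambda>x. w x - Ep M p w)"
  have p1pd: "p1 \<in> pos_dens M" unfolding p1_def by (rule ep_pd[OF p Sp_dom[OF a]])
  have h1B: "h1 \<in> Bsp M p1" using chart(1)[OF p a b w] by (simp add: h1_def p1_def)
  obtain T0 where T0: "T0 > 0" and T0': "\<forall>t. 0 \<le> t \<and> t < T0 \<longrightarrow> (\<lambda>x. b x + t * (w x - Ep M p w)) \<in> Sp M p \<and>
      (\<lambda>x. s_p M (e_p M p a) (e_p M p b) x + t * (w x - Ep M (e_p M p a) w)) \<in> Sp M (e_p M p a) \<and>
      (AE x in M. e_p M (e_p M p a) (\<lambda>x. s_p M (e_p M p a) (e_p M p b) x + t * (w x - Ep M (e_p M p a) w)) x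
          = e_p M p (\<lambda>x. b x + t * (w x - Ep M p w)) x)"
    using chart(2)[OF p a b w] by blast
  have T0a: "(\<lambda>x. b x + t * w' x) \<in> Sp M p" and T0b: "(\<lambda>x. u1 x + t * h1 x) \<in> Sp M p1"
    and T0c: "AE x in M. e_p M p1 (\<lambda>x. u1 x + t * h1 x) x = e_p M p (\<lambda>x. b x + t * w' x) x"
    if t: "0 \<le> t" "t < T0" for t
  proof -
    have "(\<lambda>x. b x + t * (w x - Ep M p w)) \<in> Sp M p \<and>
      (\<lambda>x. s_p M (e_p M p a) (e_p M p b) x + t * (w x - Ep M (e_p M p a) w)) \<in> Sp M (e_p M p a) \<and>
      (AE x in M. e_p M (e_p M p a) (\<lambda>x. s_p M (e_p M p a) (e_p M p b) x + t * (w x - Ep M (e_p M p a) w)) x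
          = e_p M p (\<lambda>x. b x + t * (w x - Ep M p w)) x)" using T0' t by blast
    then show "(\<lambda>x. b x + t * w' x) \<in> Sp M p" "(\<lambda>x. u1 x + t * h1 x) \<in> Sp M p1"
      "AE x in M. e_p M p1 (\<lambda>x. u1 x + t * h1 x) x = e_p M p (\<lambda>x. b x + t * w' x) x"
      unfolding w'_def h1_def u1_def p1_def by auto
  qed
  have Eeq: "E (e_p M p1 (\<lambda>x. u1 x + t * h1 x)) = E (e_p M p (\<lambda>x. b x + t * w' x))" if t: "0 \<le> t" "t < T0" for t
  proof -
    have S: "(\<lambda>x. b x + t * w' x) \<in> Sp M p" by (rule T0a[OF t])
    have A: "AE x in M. e_p M p1 (\<lambda>x. u1 x + t * h1 x) x = e_p M p (\<lambda>x. b x + t * w' x) x" by (rule T0c[OF t])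
    have "e_p M p (\<lambda>x. b x + t * w' x) \<in> maxexp M p" using S by (simp add: maxexp_def)
    moreover have "AE x in M. e_p M p (\<lambda>x. b x + t * w' x) x = e_p M p1 (\<lambda>x. u1 x + t * h1 x) x"
      using A by (auto elim: AE_mp)
    ultimately show ?thesis by (rule E_ae)
  qed
  have E0: "E (e_p M p1 u1) = E (e_p M p b)" using Eeq[of 0] T0 by simp
  note L' = L[unfolded frechet_deriv_def]
  note lin = L'[THEN conjunct1, folded p1_def]
  note rem = L'[THEN conjunct2, THEN conjunct2, folded p1_def, folded u1_def]
  obtain \<delta> where \<delta>: "\<delta> > 0" "\<forall>h\<in>Bsp M p1. (\<lambda>x. u1 x + h x) \<in> Sp M p1 \<and> lux_norm M p1 h < \<delta> \<longrightarrow>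
        \<bar>E (e_p M p1 (\<lambda>x. u1 x + h x)) - E (e_p M p1 u1) - L h\<bar> \<le> e * lux_norm M p1 h"
    using rem e by blast
  define N where "N = lux_norm M p1 h1"
  have N0: "N \<ge> 0" unfolding N_def by (rule lux_nonneg'[OF p1pd Bsp_orlicz[OF h1B]])
  define T where "T = min T0 (\<delta> / (N + 1))"
  have T: "T > 0" using T0 \<delta> N0 by (simp add: T_def)
  show ?thesis
  proof (intro exI[of _ T] conjI allI impI T)
    fix t assume t: "0 < t \<and> t < T"
    have tT0: "t < T0" using t by (simp add: T_def)
    have hB: "(\<lambda>x. t * h1 x) \<in> Bsp M p1" by (rule Bsp_scale[OF p1pd h1B])
    have hl: "lux_norm M p1 (\<lambda>x. t * h1 x) \<le> t * N"
      using lux_scale'[OF p1pd Bsp_orlicz[OF h1B], of t] t by (simp add: N_def)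
    have "t * N \<le> t * (N + 1)" using t by simp
    also have "\<dots> < (\<delta> / (N + 1)) * (N + 1)" using t N0 by (intro mult_strict_right_mono) (auto simp: T_def)
    also have "\<dots> = \<delta>" using N0 by simp
    finally have hl2: "lux_norm M p1 (\<lambda>x. t * h1 x) < \<delta>" using hl by simp
    have S1: "(\<lambda>x. u1 x + t * h1 x) \<in> Sp M p1" using T0b t tT0 by simp
    have "\<bar>E (e_p M p1 (\<lambda>x. u1 x + t * h1 x)) - E (e_p M p1 u1) - L (\<lambda>x. t * h1 x)\<bar> \<le> e * lux_norm M p1 (\<lambda>x. t * h1 x)"
      using bspec[OF \<delta>(2) hB] S1 hl2 by blast
    also have "\<dots> \<le> e * (t * N)" using hl e by (intro mult_left_mono) auto
    finally have X: "\<bar>E (e_p M p1 (\<lambda>x. u1 x + t * h1 x)) - E (e_p M p1 u1) - L (\<lambda>x. t * h1 x)\<bar> \<le> e * (t * N)" .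
    have "L (\<lambda>x. t * h1 x + 0 * h1 x) = t * L h1 + 0 * L h1" using lin h1B by blast
    moreover have "(\<lambda>x. t * h1 x + 0 * h1 x) = (\<lambda>x. t * h1 x)" by simp
    ultimately have Lt: "L (\<lambda>x. t * h1 x) = t * L h1" by simp
    have Et: "E (e_p M p1 (\<lambda>x. u1 x + t * h1 x)) = E (e_p M p (\<lambda>x. b x + t * w' x))"
      using Eeq[of t] t tT0 by simp
    have G: "\<bar>E (e_p M p (\<lambda>x. b x + t * w' x)) - E (e_p M p b) - t * L h1\<bar> \<le> e * t * N"
      using X unfolding Et E0 Lt by (simp add: mult.assoc)
    show "\<bar>E (e_p M p (\<lambda>x. b x + t * (w x - Ep M p w))) - E (e_p M p b) - t * L (\<lambda>x. w x - Ep M (e_p M p a) w)\<bar>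
       \<le> e * t * lux_norm M (e_p M p a) (\<lambda>x. w x - Ep M (e_p M p a) w)"
      using G unfolding w'_def h1_def N_def p1_def .
  qed
qed

lemma Phi_star_nonneg: "0 \<le> Phi_star y"
  using young[of 0 "\<bar>y\<bar>"] by (simp add: Phi_star_def)

lemma young_int: assumes p: "p \<in> pos_dens M" and f: "f \<in> orlicz M Phi p" and g: "g \<in> orlicz M Phi_star p"
  shows "integrable M (\<lambda>x. p x * (g x * f x))"
proof -
  obtain \<alpha> where fm[measurable]: "f \<in> borel_measurable M" and al: "\<alpha> > 0"
      and A: "(\<integral>\<^sup>+x. ennreal (p x * Phi (\<alpha> * f x)) \<partial>M) < \<infinity>" using f by (auto simp: orlicz_def)
  obtain \<beta> where gm[measurable]: "g \<in> borel_measurable M" and be: "\<beta> > 0"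
      and B: "(\<integral>\<^sup>+x. ennreal (p x * Phi_star (\<beta> * g x)) \<partial>M) < \<infinity>" using g by (auto simp: orlicz_def)
  note pm[measurable] = pd_meas[OF p]
  define k where "k = 1 / (\<alpha> * \<beta>)"
  have k0: "k > 0" using al be by (simp add: k_def)
  have pt: "AE x in M. ennreal (norm (p x * (g x * f x))) \<le>
      ennreal k * (ennreal 2 * ennreal (p x * Phi (\<alpha> * f x)) + ennreal 2 * ennreal (p x) + ennreal (p x * Phi_star (\<beta> * g x)))"
    using pd_nonneg[OF p]
  proof (rule AE_mp, intro AE_I2 impI)
    fix x assume px: "0 \<le> p x"
    have y: "\<bar>\<alpha> * f x\<bar> * \<bar>\<beta> * g x\<bar> \<le> exp \<bar>\<alpha> * f x\<bar> - 1 - \<bar>\<alpha> * f x\<bar> + Phi_star (\<beta> * g x)"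
      using young[of "\<bar>\<alpha> * f x\<bar>" "\<bar>\<beta> * g x\<bar>"] by (simp add: Phi_star_def)
    have "exp \<bar>\<alpha> * f x\<bar> \<le> 2 * Phi (\<alpha> * f x) + 2" by (rule exp_abs_le_Phi)
    then have y2: "\<bar>\<alpha> * f x\<bar> * \<bar>\<beta> * g x\<bar> \<le> 2 * Phi (\<alpha> * f x) + 2 + Phi_star (\<beta> * g x)" using y by linarith
    have "\<bar>g x * f x\<bar> = k * (\<bar>\<alpha> * f x\<bar> * \<bar>\<beta> * g x\<bar>)" using al be by (simp add: k_def abs_mult)
    also have "\<dots> \<le> k * (2 * Phi (\<alpha> * f x) + 2 + Phi_star (\<beta> * g x))" using y2 k0 by (intro mult_left_mono) auto
    finally have "p x * \<bar>g x * f x\<bar> \<le> p x * (k * (2 * Phi (\<alpha> * f x) + 2 + Phi_star (\<beta> * g x)))"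
      using px by (intro mult_left_mono)
    also have "\<dots> = k * (2 * (p x * Phi (\<alpha> * f x)) + 2 * p x + p x * Phi_star (\<beta> * g x))" by (simp add: algebra_simps)
    finally have "ennreal (norm (p x * (g x * f x))) \<le> ennreal (k * (2 * (p x * Phi (\<alpha> * f x)) + 2 * p x + p x * Phi_star (\<beta> * g x)))"
      using px by (intro ennreal_leI) (simp add: abs_mult)
    also have "\<dots> = ennreal k * (ennreal 2 * ennreal (p x * Phi (\<alpha> * f x)) + ennreal 2 * ennreal (p x) + ennreal (p x * Phi_star (\<beta> * g x)))"
    proof -
      have n1: "0 \<le> 2 * (p x * Phi (\<alpha> * f x))" using px Phi_nonneg by simp
      have n2: "0 \<le> 2 * p x" using px by simp
      have n3: "0 \<le> p x * Phi_star (\<beta> * g x)" using px Phi_star_nonneg by simp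
      have k0': "0 \<le> k" using k0 by simp
      have "ennreal (k * (2 * (p x * Phi (\<alpha> * f x)) + 2 * p x + p x * Phi_star (\<beta> * g x))) =
          ennreal k * (ennreal (2 * (p x * Phi (\<alpha> * f x))) + ennreal (2 * p x) + ennreal (p x * Phi_star (\<beta> * g x)))"
        using n1 n2 n3 by (simp only: ennreal_mult'[OF k0'] ennreal_plus add_nonneg_nonneg)
      also have "\<dots> = ennreal k * (ennreal 2 * ennreal (p x * Phi (\<alpha> * f x)) + ennreal 2 * ennreal (p x) + ennreal (p x * Phi_star (\<beta> * g x)))"
        by (simp only: ennreal_mult'[of 2] zero_le_numeral)
      finally show ?thesis .
    qed
    finally show "ennreal (norm (p x * (g x * f x))) \<le>
      ennreal k * (ennreal 2 * ennreal (p x * Phi (\<alpha> * f x)) + ennreal 2 * ennreal (p x) + ennreal (p x * Phi_star (\<beta> * g x)))" .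
  qed
  show ?thesis
  proof (rule integrableI_bounded)
    show "(\<lambda>x. p x * (g x * f x)) \<in> borel_measurable M" by simp
    have "(\<integral>\<^sup>+x. ennreal (norm (p x * (g x * f x))) \<partial>M) \<le>
      (\<integral>\<^sup>+x. ennreal k * (ennreal 2 * ennreal (p x * Phi (\<alpha> * f x)) + ennreal 2 * ennreal (p x) + ennreal (p x * Phi_star (\<beta> * g x))) \<partial>M)"
      by (rule nn_integral_mono_AE[OF pt])
    also have "\<dots> = ennreal k * (ennreal 2 * (\<integral>\<^sup>+x. ennreal (p x * Phi (\<alpha> * f x)) \<partial>M) + ennreal 2 * (\<integral>\<^sup>+x. ennreal (p x) \<partial>M)
        + (\<integral>\<^sup>+x. ennreal (p x * Phi_star (\<beta> * g x)) \<partial>M))"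
      by (simp add: nn_integral_add nn_integral_cmult)
    also have "\<dots> < \<infinity>" using A B pd_nn1[OF p] by (simp add: ennreal_mult_less_top)
    finally show "(\<integral>\<^sup>+x. ennreal (norm (p x * (g x * f x))) \<partial>M) < \<infinity>" .
  qed
qed

lemma eps_zero: fixes d K :: real assumes K: "K \<ge> 0" and h: "\<And>e. e > 0 \<Longrightarrow> \<bar>d\<bar> \<le> e * K" shows "d = 0"
proof (rule ccontr)
  assume "d \<noteq> 0"
  then have d: "\<bar>d\<bar> > 0" by simp
  have "\<bar>d\<bar> \<le> (\<bar>d\<bar> / (K + 1)) * K" using h[of "\<bar>d\<bar> / (K + 1)"] d K by simp
  also have "\<dots> < (\<bar>d\<bar> / (K + 1)) * (K + 1)" using d K by (intro mult_strict_left_mono) auto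
  also have "\<dots> = \<bar>d\<bar>" using K by simp
  finally show False by simp
qed

theorem proposition5:
  fixes M :: "'a measure" and p q :: "'a \<Rightarrow> real" and E :: "('a \<Rightarrow> real) \<Rightarrow> real"
  assumes sf: "sigma_finite_measure M"
    and p: "p \<in> pos_dens M"
    and E_ae: "\<And>r r'. r \<in> maxexp M p \<Longrightarrow> (AE x in M. r x = r' x) \<Longrightarrow> E r' = E r"
    and E_diff: "\<And>r u. r \<in> maxexp M p \<Longrightarrow> u \<in> Sp M r \<Longrightarrow>
                    \<exists>L. frechet_deriv M r (\<lambda>v. E (e_p M r v)) u L"
    and q: "q \<in> maxexp M p"
  shows
    "(\<forall>p1 p2 L1 L2 w. p1 \<in> maxexp M p \<longrightarrow> p2 \<in> maxexp M p \<longrightarrow>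
        frechet_deriv M p1 (\<lambda>v. E (e_p M p1 v)) (s_p M p1 q) L1 \<longrightarrow>
        frechet_deriv M p2 (\<lambda>v. E (e_p M p2 v)) (s_p M p2 q) L2 \<longrightarrow>
        w \<in> Bsp M q \<longrightarrow>
        L1 (\<lambda>x. w x - Ep M p1 w) = L2 (\<lambda>x. w x - Ep M p2 w))
   \<and> (\<forall>L. frechet_deriv M p (\<lambda>v. E (e_p M p v)) (s_p M p q) L \<longrightarrow>
        linear_on (Bsp M q) (\<lambda>w. L (\<lambda>x. w x - Ep M p w)))
   \<and> (\<forall>L nab G. frechet_deriv M p (\<lambda>v. E (e_p M p v)) (s_p M p q) L \<longrightarrow>
        nab \<in> Bstar M p \<longrightarrow>
        (\<forall>v\<in>Bsp M p. L v = Ep M p (\<lambda>x. nab x * v x)) \<longrightarrow>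
        (\<forall>r\<in>maxexp M p. G r \<in> Bsp M r) \<longrightarrow>
        L (\<lambda>x. G q x - Ep M p (G q)) = Ep M q (\<lambda>x. p x / q x * nab x * G q x))"
proof -
  obtain b where b: "b \<in> Sp M p" and qb: "q = e_p M p b" using q by (auto simp: maxexp_def)
  have qpd: "q \<in> pos_dens M" unfolding qb by (rule ep_pd[OF p Sp_dom[OF b]])
  obtain Cq where Cq: "Cq > 0" "\<forall>g\<in>orlicz M Phi q. g \<in> orlicz M Phi p \<and> lux_norm M p g \<le> Cq * lux_norm M q g"
    using cmp_rp[OF p b] unfolding qb[symmetric] by blast
  have toP: "g \<in> Bsp M q \<Longrightarrow> g \<in> orlicz M Phi p" for g using Cq Bsp_orlicz by blast
  have part1: "\<forall>p1 p2 L1 L2 w. p1 \<in> maxexp M p \<longrightarrow> p2 \<in> maxexp M p \<longrightarrow>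
        frechet_deriv M p1 (\<lambda>v. E (e_p M p1 v)) (s_p M p1 q) L1 \<longrightarrow>
        frechet_deriv M p2 (\<lambda>v. E (e_p M p2 v)) (s_p M p2 q) L2 \<longrightarrow>
        w \<in> Bsp M q \<longrightarrow>
        L1 (\<lambda>x. w x - Ep M p1 w) = L2 (\<lambda>x. w x - Ep M p2 w)"
  proof (intro allI impI)
    fix p1 p2 L1 L2 w
    assume h1: "p1 \<in> maxexp M p" and h2: "p2 \<in> maxexp M p"
      and F1: "frechet_deriv M p1 (\<lambda>v. E (e_p M p1 v)) (s_p M p1 q) L1"
      and F2: "frechet_deriv M p2 (\<lambda>v. E (e_p M p2 v)) (s_p M p2 q) L2"
      and wB: "w \<in> Bsp M q"
    obtain a1 where a1: "a1 \<in> Sp M p" and pa1: "p1 = e_p M p a1" using h1 by (auto simp: maxexp_def)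
    obtain a2 where a2: "a2 \<in> Sp M p" and pa2: "p2 = e_p M p a2" using h2 by (auto simp: maxexp_def)
    have wo: "w \<in> orlicz M Phi p" by (rule toP[OF wB])
    have F1': "frechet_deriv M (e_p M p a1) (\<lambda>v. E (e_p M (e_p M p a1) v)) (s_p M (e_p M p a1) (e_p M p b)) L1"
      using F1 unfolding pa1 qb .
    have F2': "frechet_deriv M (e_p M p a2) (\<lambda>v. E (e_p M (e_p M p a2) v)) (s_p M (e_p M p a2) (e_p M p b)) L2"
      using F2 unfolding pa2 qb .
    have p1pd: "e_p M p a1 \<in> pos_dens M" by (rule ep_pd[OF p Sp_dom[OF a1]])
    have p2pd: "e_p M p a2 \<in> pos_dens M" by (rule ep_pd[OF p Sp_dom[OF a2]])
    define N1 where "N1 = lux_norm M (e_p M p a1) (\<lambda>x. w x - Ep M (e_p M p a1) w)"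
    define N2 where "N2 = lux_norm M (e_p M p a2) (\<lambda>x. w x - Ep M (e_p M p a2) w)"
    have N1: "N1 \<ge> 0" unfolding N1_def by (rule lux_nonneg'[OF p1pd Bsp_orlicz[OF chart(1)[OF p a1 b wo]]])
    have N2: "N2 \<ge> 0" unfolding N2_def by (rule lux_nonneg'[OF p2pd Bsp_orlicz[OF chart(1)[OF p a2 b wo]]])
    define D1 where "D1 = L1 (\<lambda>x. w x - Ep M (e_p M p a1) w)"
    define D2 where "D2 = L2 (\<lambda>x. w x - Ep M (e_p M p a2) w)"
    have "D1 - D2 = 0"
    proof (rule eps_zero[of "N1 + N2"])
      show "0 \<le> N1 + N2" using N1 N2 by simp
      fix e :: real assume e: "e > 0"
      obtain T1 where T1: "T1 > 0" "\<forall>t. 0 < t \<and> t < T1 \<longrightarrow>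
        \<bar>E (e_p M p (\<lambda>x. b x + t * (w x - Ep M p w))) - E (e_p M p b) - t * D1\<bar> \<le> e * t * N1"
        using dir[OF p a1 b wo E_ae F1' e] unfolding D1_def N1_def by blast
      obtain T2 where T2: "T2 > 0" "\<forall>t. 0 < t \<and> t < T2 \<longrightarrow>
        \<bar>E (e_p M p (\<lambda>x. b x + t * (w x - Ep M p w))) - E (e_p M p b) - t * D2\<bar> \<le> e * t * N2"
        using dir[OF p a2 b wo E_ae F2' e] unfolding D2_def N2_def by blast
      define t where "t = min T1 T2 / 2"
      have t: "0 < t" "t < T1" "t < T2" using T1 T2 by (auto simp: t_def)
      define G where "G = E (e_p M p (\<lambda>x. b x + t * (w x - Ep M p w))) - E (e_p M p b)"
      have g1: "\<bar>G - t * D1\<bar> \<le> e * t * N1" using T1 t by (simp add: G_def)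
      have g2: "\<bar>G - t * D2\<bar> \<le> e * t * N2" using T2 t by (simp add: G_def)
      have eqn: "(G - t * D2) - (G - t * D1) = t * (D1 - D2)" by (simp add: algebra_simps)
      have "t * \<bar>D1 - D2\<bar> = \<bar>(G - t * D2) - (G - t * D1)\<bar>" unfolding eqn using t by (simp add: abs_mult)
      also have "\<dots> \<le> \<bar>G - t * D2\<bar> + \<bar>G - t * D1\<bar>" by (rule abs_triangle_ineq4)
      also have "\<dots> \<le> t * (e * (N1 + N2))" using g1 g2 by (simp add: algebra_simps)
      finally show "\<bar>D1 - D2\<bar> \<le> e * (N1 + N2)" using t by simp
    qed
    then show "L1 (\<lambda>x. w x - Ep M p1 w) = L2 (\<lambda>x. w x - Ep M p2 w)"
      unfolding pa1 pa2 D1_def[symmetric] D2_def[symmetric] by simp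
  qed
  have part2: "\<forall>L. frechet_deriv M p (\<lambda>v. E (e_p M p v)) (s_p M p q) L \<longrightarrow>
        linear_on (Bsp M q) (\<lambda>w. L (\<lambda>x. w x - Ep M p w))"
  proof (intro allI impI)
    fix L assume F: "frechet_deriv M p (\<lambda>v. E (e_p M p v)) (s_p M p q) L"
    have lin: "\<forall>v\<in>Bsp M p. \<forall>w\<in>Bsp M p. \<forall>\<alpha> \<beta>::real. L (\<lambda>x. \<alpha> * v x + \<beta> * w x) = \<alpha> * L v + \<beta> * L w"
      using F[unfolded frechet_deriv_def] by blast
    show "linear_on (Bsp M q) (\<lambda>w. L (\<lambda>x. w x - Ep M p w))" unfolding linear_on_def
    proof (intro ballI allI)
      fix v w and \<alpha> \<beta> :: real assume v: "v \<in> Bsp M q" and w: "w \<in> Bsp M q"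
      have vo: "v \<in> orlicz M Phi p" by (rule toP[OF v])
      have wo: "w \<in> orlicz M Phi p" by (rule toP[OF w])
      have e: "Ep M p (\<lambda>x. \<alpha> * v x + \<beta> * w x) = \<alpha> * Ep M p v + \<beta> * Ep M p w" by (rule Ep_lin[OF p vo wo])
      have f: "(\<lambda>x. \<alpha> * v x + \<beta> * w x - Ep M p (\<lambda>x. \<alpha> * v x + \<beta> * w x)) =
          (\<lambda>x. \<alpha> * (v x - Ep M p v) + \<beta> * (w x - Ep M p w))" unfolding e by (simp add: algebra_simps)
      have "L (\<lambda>x. \<alpha> * (\<lambda>x. v x - Ep M p v) x + \<beta> * (\<lambda>x. w x - Ep M p w) x) =
          \<alpha> * L (\<lambda>x. v x - Ep M p v) + \<beta> * L (\<lambda>x. w x - Ep M p w)"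
        by (rule lin[rule_format, OF Bsp_center[OF p vo] Bsp_center[OF p wo]])
      then show "L (\<lambda>x. (\<lambda>x. \<alpha> * v x + \<beta> * w x) x - Ep M p (\<lambda>x. \<alpha> * v x + \<beta> * w x)) =
          \<alpha> * L (\<lambda>x. v x - Ep M p v) + \<beta> * L (\<lambda>x. w x - Ep M p w)"
        using f by simp
    qed
  qed
  have part3: "\<forall>L nab G. frechet_deriv M p (\<lambda>v. E (e_p M p v)) (s_p M p q) L \<longrightarrow>
        nab \<in> Bstar M p \<longrightarrow>
        (\<forall>v\<in>Bsp M p. L v = Ep M p (\<lambda>x. nab x * v x)) \<longrightarrow>
        (\<forall>r\<in>maxexp M p. G r \<in> Bsp M r) \<longrightarrow>
        L (\<lambda>x. G q x - Ep M p (G q)) = Ep M q (\<lambda>x. p x / q x * nab x * G q x)"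
  proof (intro allI impI)
    fix L nab G
    assume nB: "nab \<in> Bstar M p" and rep: "\<forall>v\<in>Bsp M p. L v = Ep M p (\<lambda>x. nab x * v x)"
      and Gf: "\<forall>r\<in>maxexp M p. G r \<in> Bsp M r"
    have GqB: "G q \<in> Bsp M q" using Gf q by blast
    have Gqo: "G q \<in> orlicz M Phi p" by (rule toP[OF GqB])
    define c where "c = Ep M p (G q)"
    have no: "nab \<in> orlicz M Phi_star p" and n0: "Ep M p nab = 0" using nB by (auto simp: Bstar_def)
    have "L (\<lambda>x. G q x - c) = Ep M p (\<lambda>x. nab x * (G q x - c))"
      using rep Bsp_center[OF p Gqo] unfolding c_def by blast
    also have "\<dots> = (\<integral>x. p x * (nab x * G q x) - c * (p x * (nab x * 1)) \<partial>M)"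
      unfolding Ep_def by (rule Bochner_Integration.integral_cong) (simp_all add: algebra_simps)
    also have "\<dots> = (\<integral>x. p x * (nab x * G q x) \<partial>M) - c * (\<integral>x. p x * (nab x * 1) \<partial>M)"
      using young_int[OF p Gqo no] young_int[OF p orlicz_const[OF p, of 1] no] by simp
    also have "(\<integral>x. p x * (nab x * 1) \<partial>M) = 0" using n0 by (simp add: Ep_def)
    finally have lhs: "L (\<lambda>x. G q x - c) = (\<integral>x. p x * (nab x * G q x) \<partial>M)" by simp
    have "Ep M q (\<lambda>x. p x / q x * nab x * G q x) = (\<integral>x. p x * (nab x * G q x) \<partial>M)"
      unfolding Ep_def
    proof (rule Bochner_Integration.integral_cong)
      fix x
      show "q x * (p x / q x * nab x * G q x) = p x * (nab x * G q x)"
      proof (cases "p x = 0")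
        case True
        then show ?thesis by (simp add: qb e_p_def)
      next
        case False
        then have "q x \<noteq> 0" by (simp add: qb e_p_def)
        then show ?thesis by (simp add: field_simps)
      qed
    qed simp
    then show "L (\<lambda>x. G q x - Ep M p (G q)) = Ep M q (\<lambda>x. p x / q x * nab x * G q x)"
      using lhs by (simp add: c_def)
  qed
  show ?thesis using part1 part2 part3 by blast
qed

end
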